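(* Consider the following evolution model. Let $X$ and $Z$ be positive integer-valued random variables; let $(X_n)_{n\ge 0}$ be i.i.d.\ copies of $X$, $(Z_n)_{n\ge 0}$ i.i.d.\ copies of $Z$, all mutually independent. Fix $p\in(0,1)$ and set $q=1-p$. The state at time $n$ is a finite set $T_n$ of vertices, each carrying a fitness in $[0,1]$, with $T_0=\emptyset$. At each time $n$, independently of everything else: with probability $p$, $Z_n$ new vertices are added, each with a fitness uniformly distributed on $[0,1]$ independently of each other and of everything else (so $|T_{n+1}|=|T_n|+Z_n$); otherwise (with probability $q$) the $X_n$ vertices with the smallest fitnesses are removed, and if $T_n$ has fewer than $X_n$ vertices all are removed (so $|T_{n+1}|=\max\{|T_n|-X_n,0\}$). Assume there is an integer constant $M>0$ such that $X\le M$ almost surely, and $\mathbb{E}(Z^2)<\infty$. Let $\mu_X=\mathbb{E}X$, $\mu_Z=\mathbb{E}Z$, $p_c=\frac{\mu_X}{\mu_X+\mu_Z}$, suppose $p\in(p_c,1)$, and let $$f=\frac{q}{p}\,\frac{\mu_X}{\mu_Z}\in(0,1).$$ Let $R_n$ be the set of vertices alive at time $n$ whose fitnesses lie in $[f,1]$, and $R'_n$ the set of all vertices born during times $0$ through $n$ whose fitness lies in $[f,1]$. Then for every $\varepsilon>0$ there is a constant $C>0$ such that, almost surely, there exists $n_0\in\mathbb{N}$ (possibly random) with $$0\le |R'_n|-|R_n|\le C\,n^{\frac12+\varepsilon}\quad\text{for all } n\ge n_0.$$ Moreover, $T_n$ (viewed as the set of fitnesses of its vertices) approaches a random sample from the uniform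 distribution $U[f,1]$.
   Context: Definition: Suppose $A_1\subseteq A_2\subseteq\cdots$ is an infinite sequence of sets, each a finite collection of points in $\mathbb{R}$. We say $A_n$ approaches a random sample from distribution $F$ if, with probability $1$, there exists another sequence of sets $B_1\subseteq B_2\subseteq\cdots$ such that (i) each $B_n$ is a finite collection of i.i.d.\ random variables with common distribution $F$; (ii) $|B_n|\to\infty$ as $n\to\infty$; (iii) $|A_n\,\Delta\, B_n|=o(|B_n|)$ as $n\to\infty$, where $A\Delta B=(A\setminus B)\cup(B\setminus A)$. *)

theory Defs
  imports "HOL-Probability.Probability" "HOL-Library.Nat_Bijection"
begin

text \<open>Vertices are labelled by pairs (birth time n, index k) with k < Z n.
  The fitness of vertex (n,k) is U n k.\<close>

text \<open>Remove the m vertices of smallest fitness (ties, which occur with probability 0,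
  are broken deterministically by the vertex label via a stable sort); if fewer than m vertices exist, all are removed.\<close>
definition kill_smallest :: "(nat \<times> nat \<Rightarrow> real) \<Rightarrow> nat \<Rightarrow> (nat \<times> nat) set \<Rightarrow> (nat \<times> nat) set" where
  "kill_smallest fit m S =
     prod_decode ` set (drop m (sort_key (\<lambda>c. fit (prod_decode c)) (sorted_list_of_set (prod_encode ` S))))"

text \<open>The state T_n, as a function of the coin flips b (True = birth step), the removal
  sizes x, the birth sizes z and the fitnesses u.\<close>
primrec tree :: "(nat \<Rightarrow> bool) \<Rightarrow> (nat \<Rightarrow> nat) \<Rightarrow> (nat \<Rightarrow> nat) \<Rightarrow> (nat \<Rightarrow> nat \<Rightarrow> real) \<Rightarrow> nat \<Rightarrow> (nat \<times> nat) set" where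
  "tree b x z u 0 = {}"
| "tree b x z u (Suc n) =
     (if b n then tree b x z u n \<union> {(n, k) | k. k < z n}
      else kill_smallest (\<lambda>v. u (fst v) (snd v)) (x n) (tree b x z u n))"

text \<open>Index set for all the driving random variables of the model, used to state
  their mutual independence (all coerced to real values).\<close>
datatype src = SX nat | SZ nat | SB nat | SU nat nat

fun model_vars :: "(nat \<Rightarrow> 'a \<Rightarrow> nat) \<Rightarrow> (nat \<Rightarrow> 'a \<Rightarrow> nat) \<Rightarrow> (nat \<Rightarrow> 'a \<Rightarrow> bool) \<Rightarrow> (nat \<Rightarrow> nat \<Rightarrow> 'a \<Rightarrow> real)
    \<Rightarrow> src \<Rightarrow> 'a \<Rightarrow> real" where
  "model_vars X Z B U (SX n) = (\<lambda>\<omega>. real (X n \<omega>))"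
| "model_vars X Z B U (SZ n) = (\<lambda>\<omega>. real (Z n \<omega>))"
| "model_vars X Z B U (SB n) = (\<lambda>\<omega>. of_bool (B n \<omega>))"
| "model_vars X Z B U (SU n k) = U n k"

text \<open>"A_n approaches a random sample from distribution F" (A_n random finite sets of reals):
  with probability 1 there are nested finite subcollections B_n of an i.i.d. sequence Y
  with law F such that |B_n| \<rightarrow> \<infinity> and |A_n \<Delta> B_n| = o(|B_n|).\<close>
definition approaches_random_sample :: "'a measure \<Rightarrow> (nat \<Rightarrow> 'a \<Rightarrow> real set) \<Rightarrow> real measure \<Rightarrow> bool" where
  "approaches_random_sample M A F \<longleftrightarrow>
     (\<exists>Y :: nat \<Rightarrow> 'a \<Rightarrow> real.
        prob_space.indep_vars M (\<lambda>_. borel) Y UNIV \<and>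
        (\<forall>i. distr M lborel (Y i) = F) \<and>
        (AE \<omega> in M. \<exists>I :: nat \<Rightarrow> nat set.
            (\<forall>n. finite (I n)) \<and> incseq I \<and>
            filterlim (\<lambda>n. card ((\<lambda>i. Y i \<omega>) ` I n)) at_top sequentially \<and>
            (\<forall>e>0. eventually (\<lambda>n.
                real (card ((A n \<omega> - (\<lambda>i. Y i \<omega>) ` I n) \<union> ((\<lambda>i. Y i \<omega>) ` I n - A n \<omega>)))
                  \<le> e * real (card ((\<lambda>i. Y i \<omega>) ` I n))) sequentially)))"

end

theory Submission
  imports Defs "HOL-Real_Asymp.Real_Asymp"
begin


lemma kill_props:
  fixes fit :: "nat \<times> nat \<Rightarrow> real"
  assumes fin: "finite S"
  shows "kill_smallest fit m S \<subseteq> S"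
    and "card (kill_smallest fit m S) = card S - m"
    and "\<And>a b. a \<in> S - kill_smallest fit m S \<Longrightarrow> b \<in> kill_smallest fit m S \<Longrightarrow> fit a \<le> fit b"
proof -
  define xs where "xs = sorted_list_of_set (prod_encode ` S)"
  define L where "L = sort_key (\<lambda>c. fit (prod_decode c)) xs"
  have K: "kill_smallest fit m S = prod_decode ` set (drop m L)"
    unfolding kill_smallest_def L_def xs_def ..
  have dxs: "distinct xs" and sxs: "set xs = prod_encode ` S" using fin by (auto simp: xs_def)
  have dL: "distinct L" using dxs by (simp add: L_def)
  have sL: "set L = prod_encode ` S" using sxs by (simp add: L_def)
  have lenL: "length L = card S"
    using distinct_card[OF dL] sL card_image[OF inj_on_subset[OF inj_prod_encode]] by (metis subset_UNIV)
  have sortL: "sorted (map (\<lambda>c. fit (prod_decode c)) L)" by (simp add: L_def)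
  show sub: "kill_smallest fit m S \<subseteq> S"
    unfolding K using sL set_drop_subset[of m L] by auto
  have "card (kill_smallest fit m S) = card (set (drop m L))"
    unfolding K by (rule card_image) (meson inj_on_subset inj_prod_decode subset_UNIV)
  also have "\<dots> = length L - m" using dL by (simp add: distinct_card)
  finally show "card (kill_smallest fit m S) = card S - m" using lenL by simp
  fix a b assume a: "a \<in> S - kill_smallest fit m S" and b: "b \<in> kill_smallest fit m S"
  have "prod_encode a \<in> set L" using a sL by auto
  moreover have "prod_encode a \<notin> set (drop m L)"
  proof
    assume "prod_encode a \<in> set (drop m L)"
    then have "prod_decode (prod_encode a) \<in> kill_smallest fit m S" unfolding K by blast
    then show False using a by simp
  qed
  ultimately have ain: "prod_encode a \<in> set (take m L)"
    by (metis Un_iff append_take_drop_id set_append)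
  obtain c where c: "c \<in> set (drop m L)" "b = prod_decode c" using b unfolding K by auto
  have "sorted (map (\<lambda>c. fit (prod_decode c)) (take m L) @ map (\<lambda>c. fit (prod_decode c)) (drop m L))"
    using sortL by (metis append_take_drop_id map_append)
  then have "fit (prod_decode (prod_encode a)) \<le> fit (prod_decode c)"
    using ain c(1) by (auto simp: sorted_append)
  then show "fit a \<le> fit b" using c by simp
qed


locale detm =
  fixes b :: "nat \<Rightarrow> bool" and x z :: "nat \<Rightarrow> nat" and u :: "nat \<Rightarrow> nat \<Rightarrow> real" and f :: real
begin

definition fit :: "nat \<times> nat \<Rightarrow> real" where "fit v = u (fst v) (snd v)"
definition born :: "nat \<Rightarrow> (nat \<times> nat) set" where "born n = {(m,k). m < n \<and> b m \<and> k < z m}"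
abbreviation T where "T \<equiv> tree b x z u"
definition nom :: "nat \<Rightarrow> real" where "nom n = (\<Sum>m<n. if b m then 0 else real (x m))"
definition S :: "nat \<Rightarrow> real" where "S n = real (card {v \<in> born n. fit v < f}) - nom n"
fun mneg :: "nat \<Rightarrow> real" where
  "mneg 0 = 0" | "mneg (Suc n) = max (mneg n) (- S (Suc n))"

definition new :: "nat \<Rightarrow> (nat \<times> nat) set" where "new n = {(n,k) | k. k < z n}"

lemma fin_new: "finite (new n)"
proof -
  have "new n = (\<lambda>k. (n,k)) ` {..<z n}" by (auto simp: new_def)
  then show ?thesis by simp
qed

lemma born_Suc: "born (Suc n) = (if b n then born n \<union> new n else born n)"
  by (auto simp: born_def new_def less_Suc_eq)

lemma fin_born: "finite (born n)"
  by (induction n) (auto simp: born_Suc fin_new, simp add: born_def)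

lemma new_disj: "new n \<inter> born n = {}" by (auto simp: new_def born_def)

lemma T_sub: "T n \<subseteq> born n"
proof (induction n)
  case 0 then show ?case by simp
next
  case (Suc n)
  have "kill_smallest (\<lambda>v. u (fst v) (snd v)) (x n) (T n) \<subseteq> T n"
    by (rule kill_props(1)) (rule finite_subset[OF Suc fin_born])
  then show ?case using Suc by (auto simp: born_Suc new_def)
qed

lemma fin_T: "finite (T n)" using finite_subset[OF T_sub fin_born] .

lemma fit_eq: "(\<lambda>v. u (fst v) (snd v)) = fit" by (auto simp: fit_def)

lemma mneg_ge: "mneg n \<ge> - S n" "mneg n \<ge> 0" "mneg n \<le> mneg (Suc n)"
  subgoal by (cases n) (auto simp: S_def nom_def born_def)
  subgoal by (induction n) auto
  subgoal by simp
  done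

lemma mneg_mono: "m \<le> n \<Longrightarrow> mneg m \<le> mneg n"
  by (induction n rule: dec_induct) (auto intro: order_trans mneg_ge(3))

lemma invs:
  "real (card (born n - T n)) \<le> nom n \<and>
   real (card ({v \<in> born n. \<not> fit v < f} - T n)) \<le> mneg n \<and>
   real (card {v \<in> T n. fit v < f}) \<le> S n + mneg n"
proof (induction n)
  case 0 then show ?case by (simp add: born_def nom_def S_def)
next
  case (Suc n)
  note IH = Suc
  show ?case
  proof (cases "b n")
    case True
    have T': "T (Suc n) = T n \<union> new n" using True by (simp add: new_def)
    have B': "born (Suc n) = born n \<union> new n" using True by (simp add: born_Suc)
    have nom': "nom (Suc n) = nom n" using True by (simp add: nom_def)
    have e1: "born (Suc n) - T (Suc n) = born n - T n" using T' B' new_disj T_sub[of n] by blast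
    have e2: "{v \<in> born (Suc n). \<not> fit v < f} - T (Suc n) = {v \<in> born n. \<not> fit v < f} - T n"
      using T' B' new_disj T_sub[of n] by blast
    have c1: "card {v \<in> born (Suc n). fit v < f} = card {v \<in> born n. fit v < f} + card {v \<in> new n. fit v < f}"
    proof -
      have "{v \<in> born (Suc n). fit v < f} = {v \<in> born n. fit v < f} \<union> {v \<in> new n. fit v < f}" using B' by blast
      then show ?thesis using new_disj fin_born fin_new by (subst card_Un_disjoint[symmetric]) auto
    qed
    have c2: "card {v \<in> T (Suc n). fit v < f} = card {v \<in> T n. fit v < f} + card {v \<in> new n. fit v < f}"
    proof -
      have "{v \<in> T (Suc n). fit v < f} = {v \<in> T n. fit v < f} \<union> {v \<in> new n. fit v < f}" using T' by blast
      moreover have "T n \<inter> new n = {}" using new_disj[of n] T_sub[of n] by blast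
      ultimately show ?thesis using fin_T fin_new by (subst card_Un_disjoint[symmetric]) auto
    qed
    have S': "S (Suc n) = S n + card {v \<in> new n. fit v < f}" using c1 nom' by (simp add: S_def)
    show ?thesis using IH e1 e2 c2 S' nom' mneg_ge(3)[of n] by auto
  next
    case False
    let ?T = "T n" and ?K = "T (Suc n)"
    have K: "?K = kill_smallest fit (x n) ?T" using False by (simp add: fit_eq)
    have finT: "finite ?T" by (rule fin_T)
    note kp = kill_props[OF finT, where fit=fit and m="x n", folded K]
    have B': "born (Suc n) = born n" using False by (simp add: born_Suc)
    have nom': "nom (Suc n) = nom n + x n" using False by (simp add: nom_def)
    have S': "S (Suc n) = S n - x n" using B' nom' by (simp add: S_def)
    have cK: "card ?K = card ?T - x n" by (rule kp(2))
    have finK: "finite ?K" using fin_T .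
    have cTK: "card (?T - ?K) = card ?T - card ?K" using kp(1) finK by (simp add: card_Diff_subset)
    have i1: "real (card (born (Suc n) - ?K)) \<le> nom (Suc n)"
    proof -
      have "born n - ?K = (born n - ?T) \<union> (?T - ?K)" using kp(1) T_sub[of n] by blast
      then have "card (born n - ?K) = card (born n - ?T) + card (?T - ?K)"
        using fin_born finT by (subst card_Un_disjoint[symmetric]) auto
      moreover have "card (?T - ?K) \<le> x n" using cTK cK by simp
      ultimately show ?thesis using IH B' nom' by simp
    qed
    have i2: "real (card ({v \<in> born (Suc n). \<not> fit v < f} - ?K)) \<le> mneg (Suc n)"
    proof (cases "\<forall>v \<in> ?T - ?K. fit v < f")
      case True
      then have "{v \<in> born n. \<not> fit v < f} - ?K = {v \<in> born n. \<not> fit v < f} - ?T" using kp(1) by blast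
      then show ?thesis using IH B' mneg_ge(3)[of n] by (simp del: mneg.simps)
    next
      case False
      then obtain h where h: "h \<in> ?T - ?K" "\<not> fit h < f" by blast
      have nolow: "{v \<in> ?K. fit v < f} = {}" using kp(3)[OF h(1)] h(2) by force
      have "born n - ?K = ({v \<in> born n. \<not> fit v < f} - ?K) \<union> {v \<in> born n. fit v < f}"
        using nolow by blast
      then have "card (born n - ?K) = card ({v \<in> born n. \<not> fit v < f} - ?K) + card {v \<in> born n. fit v < f}"
        using fin_born by (subst card_Un_disjoint[symmetric]) auto
      then have "real (card ({v \<in> born n. \<not> fit v < f} - ?K)) \<le> - S (Suc n)"
        using i1 B' by (simp add: S_def)
      then show ?thesis using B' mneg_ge(1)[of "Suc n"] by simp
    qed
    have i3: "real (card {v \<in> ?K. fit v < f}) \<le> S (Suc n) + mneg (Suc n)"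
    proof (cases "\<exists>l \<in> ?K. fit l < f")
      case True
      then obtain l where l: "l \<in> ?K" "fit l < f" by blast
      have rem_low: "\<forall>r \<in> ?T - ?K. fit r < f" using kp(3)[OF _ l(1)] l(2) by force
      have "card ?K > 0" using l(1) finK card_gt_0_iff by blast
      then have "card (?T - ?K) = x n" using cTK cK by simp
      moreover have "{v \<in> ?T. fit v < f} = {v \<in> ?K. fit v < f} \<union> (?T - ?K)" using rem_low kp(1) by blast
      moreover have "{v \<in> ?K. fit v < f} \<inter> (?T - ?K) = {}" by blast
      moreover have "finite {v \<in> ?K. fit v < f}" "finite (?T - ?K)" using finK finT by auto
      ultimately have "card {v \<in> ?T. fit v < f} = card {v \<in> ?K. fit v < f} + x n"
        by (simp add: card_Un_disjoint)
      then show ?thesis using IH S' mneg_ge(3)[of n] by simp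
    next
      case False
      then have "{v \<in> ?K. fit v < f} = {}" by auto
      then show ?thesis using mneg_ge(1)[of "Suc n"] by (simp only: card.empty of_nat_0)
    qed
    show ?thesis using i1 i2 i3 B' by simp
  qed
qed


lemma card_le_mneg: "real (card ({v \<in> born n. \<not> fit v < f} - T n)) \<le> mneg n"
  using invs[of n] by simp

lemma R_bound:
  fixes n :: nat
  defines "R \<equiv> {v \<in> T n. f \<le> fit v \<and> fit v \<le> 1}"
  and "R' \<equiv> {(m,k). m \<le> n \<and> b m \<and> k < z m \<and> f \<le> fit (m,k) \<and> fit (m,k) \<le> 1}"
  shows "real (card R) \<le> real (card R')" "real (card R') - real (card R) \<le> mneg n + real (z n)"
proof -
  have RR: "R \<subseteq> R'" using T_sub[of n] by (auto simp: R_def R'_def born_def)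
  have sub: "R' \<subseteq> born n \<union> new n" by (auto simp: R'_def born_def new_def le_less)
  have finR': "finite R'" using finite_subset[OF sub] fin_born fin_new by blast
  show "real (card R) \<le> real (card R')" using card_mono[OF finR' RR] by simp
  have "R' - R \<subseteq> ({v \<in> born n. \<not> fit v < f} - T n) \<union> new n"
    by (auto simp: R_def R'_def born_def new_def le_less)
  then have "card (R' - R) \<le> card (({v \<in> born n. \<not> fit v < f} - T n) \<union> new n)"
    by (rule card_mono[rotated]) (use fin_born fin_new in auto)
  then have "card (R' - R) \<le> card ({v \<in> born n. \<not> fit v < f} - T n) + card (new n)"
    using card_Un_le le_trans by blast
  moreover have "card (new n) = z n"
  proof -
    have "new n = (\<lambda>k. (n,k)) ` {..<z n}" by (auto simp: new_def)
    then show ?thesis by (simp add: card_image inj_on_def)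
  qed
  moreover have "card (R' - R) = card R' - card R" using RR finR' by (simp add: card_Diff_subset finite_subset)
  moreover have "card R \<le> card R'" using card_mono[OF finR' RR] .
  ultimately show "real (card R') - real (card R) \<le> mneg n + real (z n)"
    using card_le_mneg[of n] by linarith
qed

definition Hb :: "nat \<Rightarrow> (nat \<times> nat) set" where "Hb n = {v \<in> born n. f \<le> fit v \<and> fit v \<le> 1}"

lemma fin_Hb: "finite (Hb n)" using fin_born by (simp add: Hb_def)

lemma sym_diff_bound:
  assumes le1: "\<And>v. fit v \<le> 1"
  shows "real (card ((fit ` T n - fit ` Hb n) \<union> (fit ` Hb n - fit ` T n))) \<le> S n + 2 * mneg n"
proof -
  have a: "fit ` T n - fit ` Hb n \<subseteq> fit ` {v \<in> T n. fit v < f}"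
  proof
    fix y assume "y \<in> fit ` T n - fit ` Hb n"
    then obtain v where v: "v \<in> T n" "y = fit v" "y \<notin> fit ` Hb n" by auto
    have "\<not> f \<le> fit v"
    proof
      assume "f \<le> fit v"
      then have "v \<in> Hb n" using v(1) T_sub[of n] le1[of v] unfolding Hb_def by auto
      then show False using v by auto
    qed
    then show "y \<in> fit ` {v \<in> T n. fit v < f}" using v by auto
  qed
  have b: "fit ` Hb n - fit ` T n \<subseteq> fit ` ({v \<in> born n. \<not> fit v < f} - T n)"
    by (auto simp: Hb_def)
  have fin1: "finite (fit ` {v \<in> T n. fit v < f})" using fin_T by simp
  have fin2: "finite (fit ` ({v \<in> born n. \<not> fit v < f} - T n))" using fin_born by simp
  have "card ((fit ` T n - fit ` Hb n) \<union> (fit ` Hb n - fit ` T n))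
      \<le> card (fit ` {v \<in> T n. fit v < f}) + card (fit ` ({v \<in> born n. \<not> fit v < f} - T n))"
    by (rule order_trans[OF card_mono[OF finite_UnI[OF fin1 fin2]] card_Un_le]) (use a b in blast)
  also have "\<dots> \<le> card {v \<in> T n. fit v < f} + card ({v \<in> born n. \<not> fit v < f} - T n)"
    by (intro add_mono card_image_le) (use fin_T fin_born in auto)
  finally show ?thesis using invs[of n] by linarith
qed

lemma card_Hb_lower:
  assumes zpos: "\<And>m. 0 < z m" and inj: "inj (\<lambda>m. u m 0)"
  shows "card {m \<in> {..<n}. b m \<and> f \<le> u m 0 \<and> u m 0 \<le> 1} \<le> card (fit ` Hb n)"
proof -
  have "(\<lambda>m. fit (m,0)) ` {m \<in> {..<n}. b m \<and> f \<le> u m 0 \<and> u m 0 \<le> 1} \<subseteq> fit ` Hb n"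
  proof (rule image_subsetI)
    fix m assume "m \<in> {m \<in> {..<n}. b m \<and> f \<le> u m 0 \<and> u m 0 \<le> 1}"
    then have "(m,0) \<in> Hb n" using zpos by (auto simp: Hb_def born_def fit_def)
    then show "fit (m,0) \<in> fit ` Hb n" by blast
  qed
  moreover have "inj_on (\<lambda>m. fit (m,0)) {m \<in> {..<n}. b m \<and> f \<le> u m 0 \<and> u m 0 \<le> 1}"
    using inj by (auto simp: fit_def inj_on_def inj_def)
  note facts = calculation this
  have c1: "card ((\<lambda>m. fit (m,0)) ` {m \<in> {..<n}. b m \<and> f \<le> u m 0 \<and> u m 0 \<le> 1}) \<le> card (fit ` Hb n)"
    by (rule card_mono[OF finite_imageI[OF fin_Hb]]) (rule facts(1))
  have c2: "card ((\<lambda>m. fit (m,0)) ` {m \<in> {..<n}. b m \<and> f \<le> u m 0 \<and> u m 0 \<le> 1}) = card {m \<in> {..<n}. b m \<and> f \<le> u m 0 \<and> u m 0 \<le> 1}"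
    by (rule card_image) (rule facts(2))
  show ?thesis using c1 c2 by linarith
qed

end


lemma abs_mult_le_sq: "\<bar>x * y\<bar> \<le> x\<^sup>2 + (y::real)\<^sup>2"
proof -
  have "0 \<le> (\<bar>x\<bar> - \<bar>y\<bar>)\<^sup>2" by simp
  then have "2 * (\<bar>x\<bar> * \<bar>y\<bar>) \<le> x\<^sup>2 + y\<^sup>2" by (simp add: power2_eq_square algebra_simps)
  moreover have "0 \<le> \<bar>x\<bar> * \<bar>y\<bar>" by simp
  moreover have "\<bar>x*y\<bar> = \<bar>x\<bar>*\<bar>y\<bar>" by (simp add: abs_mult)
  ultimately show ?thesis by linarith
qed

lemma sq_split_ineq:
  fixes x y t :: real assumes "t > 0"
  shows "(x + y)\<^sup>2 \<le> (1 + t) * x\<^sup>2 + (1 + 1/t) * y\<^sup>2"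
proof -
  have "0 \<le> (t * x - y)\<^sup>2 / t" using assms by simp
  also have "(t * x - y)\<^sup>2 / t = t * x\<^sup>2 - 2 * x * y + y\<^sup>2 / t"
    using assms by (simp add: power2_eq_square field_simps)
  finally show ?thesis by (simp add: power2_eq_square algebra_simps add_divide_distrib)
qed

locale l2seq = prob_space +
  fixes D :: "nat \<Rightarrow> 'a \<Rightarrow> real" and \<sigma> :: real
  assumes Dmeas[measurable]: "\<And>i. D i \<in> borel_measurable M"
  and Dint2: "\<And>i. integrable M (\<lambda>\<omega>. (D i \<omega>)\<^sup>2)"
  and Dvar: "\<And>i. expectation (\<lambda>\<omega>. (D i \<omega>)\<^sup>2) \<le> \<sigma>"
  and Dunc: "\<And>i j. i \<noteq> j \<Longrightarrow> expectation (\<lambda>\<omega>. D i \<omega> * D j \<omega>) = 0"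
begin

lemma sigma_nonneg: "0 \<le> \<sigma>"
proof -
  have "0 \<le> expectation (\<lambda>\<omega>. (D 0 \<omega>)\<^sup>2)" by (rule integral_nonneg_AE) simp
  then show ?thesis using Dvar[of 0] by linarith
qed

lemma prod_int: "integrable M (\<lambda>\<omega>. D i \<omega> * D j \<omega>)"
  by (rule Bochner_Integration.integrable_bound[OF Bochner_Integration.integrable_add[OF Dint2[of i] Dint2[of j]]])
     (auto intro!: AE_I2 simp: order_trans[OF abs_mult_le_sq])

lemma sumsq:
  assumes "finite I"
  shows "integrable M (\<lambda>\<omega>. (\<Sum>i\<in>I. D i \<omega>)\<^sup>2)"
    and "expectation (\<lambda>\<omega>. (\<Sum>i\<in>I. D i \<omega>)\<^sup>2) = (\<Sum>i\<in>I. expectation (\<lambda>\<omega>. (D i \<omega>)\<^sup>2))"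
proof -
  have eq: "(\<lambda>\<omega>. (\<Sum>i\<in>I. D i \<omega>)\<^sup>2) = (\<lambda>\<omega>. \<Sum>i\<in>I. \<Sum>j\<in>I. D i \<omega> * D j \<omega>)"
    by (simp add: power2_eq_square sum_product)
  show "integrable M (\<lambda>\<omega>. (\<Sum>i\<in>I. D i \<omega>)\<^sup>2)"
    unfolding eq by (intro Bochner_Integration.integrable_sum prod_int)
  have "expectation (\<lambda>\<omega>. (\<Sum>i\<in>I. D i \<omega>)\<^sup>2) = (\<Sum>i\<in>I. \<Sum>j\<in>I. expectation (\<lambda>\<omega>. D i \<omega> * D j \<omega>))"
    unfolding eq by (simp add: integral_sum Bochner_Integration.integrable_sum prod_int)
  also have "\<dots> = (\<Sum>i\<in>I. expectation (\<lambda>\<omega>. (D i \<omega>)\<^sup>2))"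
  proof (rule sum.cong[OF refl])
    fix i assume i: "i \<in> I"
    have "(\<Sum>j\<in>I. expectation (\<lambda>\<omega>. D i \<omega> * D j \<omega>)) = (\<Sum>j\<in>I. if j = i then expectation (\<lambda>\<omega>. (D i \<omega>)\<^sup>2) else 0)"
      by (rule sum.cong[OF refl]) (auto simp: Dunc power2_eq_square)
    also have "\<dots> = expectation (\<lambda>\<omega>. (D i \<omega>)\<^sup>2)" using i assms by simp
    finally show "(\<Sum>j\<in>I. expectation (\<lambda>\<omega>. D i \<omega> * D j \<omega>)) = expectation (\<lambda>\<omega>. (D i \<omega>)\<^sup>2)" .
  qed
  finally show "expectation (\<lambda>\<omega>. (\<Sum>i\<in>I. D i \<omega>)\<^sup>2) = (\<Sum>i\<in>I. expectation (\<lambda>\<omega>. (D i \<omega>)\<^sup>2))" .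
qed

definition Sp :: "nat \<Rightarrow> nat \<Rightarrow> 'a \<Rightarrow> real" where "Sp a k \<omega> = (\<Sum>i\<in>{a..<a+k}. D i \<omega>)"

lemma Sp_int: "integrable M (\<lambda>\<omega>. (Sp a k \<omega>)\<^sup>2)"
  unfolding Sp_def by (rule sumsq) simp

lemma Sp_bound: "expectation (\<lambda>\<omega>. (Sp a k \<omega>)\<^sup>2) \<le> real k * \<sigma>"
proof -
  have "expectation (\<lambda>\<omega>. (Sp a k \<omega>)\<^sup>2) = (\<Sum>i\<in>{a..<a+k}. expectation (\<lambda>\<omega>. (D i \<omega>)\<^sup>2))"
    unfolding Sp_def by (rule sumsq) simp
  also have "\<dots> \<le> (\<Sum>i\<in>{a..<a+k}. \<sigma>)" by (rule sum_mono) (rule Dvar)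
  finally show ?thesis by simp
qed

definition Q :: "nat \<Rightarrow> nat \<Rightarrow> 'a \<Rightarrow> real" where "Q a m \<omega> = (MAX k\<in>{..2^m}. (Sp a k \<omega>)\<^sup>2)"

lemma Sp_meas[measurable]: "Sp a k \<in> borel_measurable M" unfolding Sp_def by measurable

lemma Q_meas[measurable]: "Q a m \<in> borel_measurable M"
  unfolding Q_def by (intro borel_measurable_Max) auto

lemma Q_ge: "k \<le> 2^m \<Longrightarrow> (Sp a k \<omega>)\<^sup>2 \<le> Q a m \<omega>"
  unfolding Q_def by (rule Max_ge) auto

lemma Q_nonneg: "0 \<le> Q a m \<omega>"
  using Q_ge[of 0 m a \<omega>] by (simp add: Sp_def)

lemma Q_le_sum: "Q a m \<omega> \<le> (\<Sum>k\<le>2^m. (Sp a k \<omega>)\<^sup>2)"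
  unfolding Q_def by (subst Max_le_iff) (auto intro!: member_le_sum)

lemma Q_int: "integrable M (Q a m)"
  by (rule Bochner_Integration.integrable_bound[of _ "\<lambda>\<omega>. (\<Sum>k\<le>2^m. (Sp a k \<omega>)\<^sup>2)"])
     (auto intro!: Bochner_Integration.integrable_sum Sp_int AE_I2 simp: Q_nonneg order_trans[OF Q_le_sum])

lemma Q_rec:
  fixes t :: real assumes t: "t > 0"
  shows "Q a (Suc m) \<omega> \<le> Q a m \<omega> + (1 + 1/t) * Q (a + 2^m) m \<omega> + (1 + t) * (Sp a (2^m) \<omega>)\<^sup>2"
proof -
  have nn: "0 \<le> (1 + 1/t) * Q (a + 2^m) m \<omega>" "0 \<le> (1 + t) * (Sp a (2^m) \<omega>)\<^sup>2" "0 \<le> Q a m \<omega>"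
    using t Q_nonneg by auto
  show ?thesis unfolding Q_def[of a "Suc m"]
  proof (subst Max_le_iff, simp, simp, intro ballI)
    fix y assume "y \<in> (\<lambda>k. (Sp a k \<omega>)\<^sup>2) ` {..2 ^ Suc m}"
    then obtain k where k: "k \<le> 2^Suc m" "y = (Sp a k \<omega>)\<^sup>2" by auto
    show "y \<le> Q a m \<omega> + (1 + 1/t) * Q (a + 2^m) m \<omega> + (1 + t) * (Sp a (2^m) \<omega>)\<^sup>2"
    proof (cases "k \<le> 2^m")
      case True
      then show ?thesis using k Q_ge[of k m a \<omega>] nn by linarith
    next
      case False
      define j where "j = k - 2^m"
      have j: "k = 2^m + j" "j \<le> 2^m" using False k(1) by (auto simp: j_def)
      have "Sp a k \<omega> = Sp a (2^m) \<omega> + Sp (a + 2^m) j \<omega>"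
        unfolding Sp_def j(1) by (subst sum.atLeastLessThan_concat[symmetric, of a "a+2^m"]) (auto simp: add.assoc)
      then have "y \<le> (1 + t) * (Sp a (2^m) \<omega>)\<^sup>2 + (1 + 1/t) * (Sp (a + 2^m) j \<omega>)\<^sup>2"
        using k(2) sq_split_ineq[OF t] by simp
      also have "\<dots> \<le> (1 + t) * (Sp a (2^m) \<omega>)\<^sup>2 + (1 + 1/t) * Q (a + 2^m) m \<omega>"
        using Q_ge[OF j(2)] t by (intro add_left_mono mult_left_mono) auto
      finally show ?thesis using nn by linarith
    qed
  qed
qed

lemma poly_arith: "2 * (r+1)^3 + (r+1)^2 + r + 2 \<le> 2 * ((r::real)+2)^3" if "r \<ge> 0"
  using that by (simp add: power3_eq_cube power2_eq_square algebra_simps) 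

lemma Q_bound: "expectation (Q a m) \<le> (real m + 1)^3 * 2^m * \<sigma>"
proof (induction m arbitrary: a)
  case 0
  have "Q a 0 \<omega> = (D a \<omega>)\<^sup>2" for \<omega>
  proof -
    have "{..(2::nat)^0} = {0,1}" by auto
    then show ?thesis unfolding Q_def Sp_def by simp
  qed
  then show ?case using Dvar[of a] by simp
next
  case (Suc m)
  define t :: real where "t = real m + 1"
  have t: "t > 0" by (simp add: t_def)
  have "expectation (Q a (Suc m)) \<le> expectation (\<lambda>\<omega>. Q a m \<omega> + (1 + 1/t) * Q (a + 2^m) m \<omega> + (1 + t) * (Sp a (2^m) \<omega>)\<^sup>2)"
    by (intro integral_mono Q_int Bochner_Integration.integrable_add integrable_mult_right Sp_int Q_rec t)
  also have "\<dots> = expectation (Q a m) + (1 + 1/t) * expectation (Q (a + 2^m) m) + (1 + t) * expectation (\<lambda>\<omega>. (Sp a (2^m) \<omega>)\<^sup>2)"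
    by (simp add: Q_int Sp_int Bochner_Integration.integrable_add)
  also have "\<dots> \<le> (real m + 1)^3 * 2^m * \<sigma> + (1 + 1/t) * ((real m + 1)^3 * 2^m * \<sigma>) + (1 + t) * (real (2^m) * \<sigma>)"
    using t by (intro add_mono Suc mult_left_mono Sp_bound) auto
  also have "\<dots> = (2 * (real m+1)^3 + (real m+1)^2 + real m + 2) * 2^m * \<sigma>"
    by (simp add: t_def field_simps power3_eq_cube power2_eq_square)
  also have "\<dots> \<le> 2 * (real m + 2)^3 * 2^m * \<sigma>"
    using poly_arith[of "real m"] sigma_nonneg by (intro mult_right_mono) auto
  finally show ?case by (simp add: algebra_simps)
qed


lemma ex_pow2: "1 \<le> n \<Longrightarrow> \<exists>m. n \<le> 2^m \<and> 2^m < 2 * (n::nat)"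
proof (induction n rule: dec_induct)
  case base then show ?case by (intro exI[of _ 0]) auto
next
  case (step n)
  then obtain m where m: "n \<le> 2^m" "2^m < 2*n" by blast
  show ?case
  proof (cases "Suc n \<le> 2^m")
    case True then show ?thesis using m by (intro exI[of _ m]) auto
  next
    case False then have "2^m = n" using m by auto
    then show ?thesis by (intro exI[of _ "Suc m"]) auto
  qed
qed

lemma summable_inv_sq: "summable (\<lambda>m::nat. 1 / (real m + 1)^2)"
proof -
  have "summable (\<lambda>n::nat. inverse (real n ^ 2))" by (rule inverse_power_summable) simp
  then have "summable (\<lambda>n::nat. inverse (real (Suc n) ^ 2))" by (subst summable_Suc_iff)
  then show ?thesis by (simp add: field_simps)
qed

lemma GL_main:
  assumes \<delta>: "\<delta> > 0"
  shows "AE \<omega> in M. \<exists>C. \<forall>n. \<bar>\<Sum>i<n. D i \<omega>\<bar> \<le> C + (2 * real n) powr (1/2 + \<delta>)"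
proof -
  define thr :: "nat \<Rightarrow> real" where "thr m = ((2::real)^m) powr (1 + 2*\<delta>)" for m
  define A where "A m = {\<omega> \<in> space M. thr m < Q 0 m \<omega>}" for m
  define c where "c = 2 * \<delta> * ln 2"
  have c: "c > 0" using \<delta> by (simp add: c_def)
  have thr_pos: "thr m > 0" for m by (simp add: thr_def)
  have Asets: "A m \<in> sets M" for m unfolding A_def by measurable
  have thr_eq: "thr m = 2^m * exp (c * real m)" for m
  proof -
    have "thr m = ((2::real)^m) powr 1 * ((2::real)^m) powr (2*\<delta>)" unfolding thr_def by (subst powr_add[symmetric]) simp
    also have "((2::real)^m) powr (2*\<delta>) = exp (c * real m)"
      by (simp add: powr_def c_def ln_realpow algebra_simps)
    finally show ?thesis by simp
  qed
  have mA: "measure M (A m) \<le> (real m + 1)^3 * \<sigma> / exp (c * real m)" for m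
  proof -
    have "measure M (A m) \<le> measure M {\<omega> \<in> space M. thr m \<le> Q 0 m \<omega>}"
      unfolding A_def by (intro finite_measure_mono) auto
    also have "\<dots> \<le> expectation (Q 0 m) / thr m"
      by (rule integral_Markov_inequality_measure[OF Q_int _ AE_I2 thr_pos]) (auto simp: Q_nonneg)
    also have "\<dots> \<le> (real m + 1)^3 * 2^m * \<sigma> / thr m"
      using thr_pos by (intro divide_right_mono Q_bound) (auto simp: less_imp_le)
    also have "\<dots> = (real m + 1)^3 * \<sigma> / exp (c * real m)" unfolding thr_eq by simp
    finally show ?thesis .
  qed
  have lim: "(\<lambda>m. (real m + 1)^5 / exp (c * real m)) \<longlonglongrightarrow> 0" using c by real_asymp
  have ev: "eventually (\<lambda>m. (real m + 1)^5 / exp (c * real m) \<le> 1) sequentially"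
    using order_tendstoD(2)[OF lim, of 1] by (auto elim: eventually_mono)
  have summ: "summable (\<lambda>m. measure M (A m))"
  proof (rule summable_comparison_test_ev)
    show "summable (\<lambda>m. \<sigma> * (1 / (real m + 1)^2))" by (intro summable_mult summable_inv_sq)
    show "\<forall>\<^sub>F m in sequentially. norm (measure M (A m)) \<le> \<sigma> * (1 / (real m + 1)^2)"
      using ev
    proof eventually_elim
      case (elim m)
      have pos: "(real m + 1)^2 > 0" by simp
      have "(real m + 1)^3 / exp (c * real m) = ((real m + 1)^5 / exp (c * real m)) / (real m + 1)^2"
      proof -
        have e: "(real m+1)^5 = (real m+1)^3 * (real m+1)^2" by (simp flip: power_add)
        show ?thesis using pos unfolding e by (simp add: divide_simps)
      qed
      also have "\<dots> \<le> 1 / (real m + 1)^2" using elim by (intro divide_right_mono) auto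
      finally have "(real m + 1)^3 * \<sigma> / exp (c * real m) \<le> \<sigma> * (1 / (real m + 1)^2)"
        using sigma_nonneg by (metis mult_left_mono mult.commute times_divide_eq_right)
      then show ?case using mA[of m] by simp
    qed
  qed
  have "AE \<omega> in M. \<forall>\<^sub>F m in sequentially. \<omega> \<in> space M - A m"
    by (rule borel_cantelli_AE1[OF Asets]) (auto simp: summ less_top[symmetric])
  then show ?thesis
  proof (rule AE_mp[OF _ AE_I2], intro impI)
    fix \<omega> assume \<omega>: "\<omega> \<in> space M" and evA: "\<forall>\<^sub>F m in sequentially. \<omega> \<in> space M - A m"
    then obtain m0 where m0: "\<And>m. m \<ge> m0 \<Longrightarrow> Q 0 m \<omega> \<le> thr m"
      unfolding eventually_sequentially A_def by (auto simp: not_less)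
    define C where "C = Max ((\<lambda>n. \<bar>\<Sum>i<n. D i \<omega>\<bar>) ` {..<2^m0})"
    show "\<exists>C. \<forall>n. \<bar>\<Sum>i<n. D i \<omega>\<bar> \<le> C + (2 * real n) powr (1/2 + \<delta>)"
    proof (intro exI allI)
      fix n
      have pnn: "0 \<le> (2 * real n) powr (1/2 + \<delta>)" by simp
      show "\<bar>\<Sum>i<n. D i \<omega>\<bar> \<le> C + (2 * real n) powr (1/2 + \<delta>)"
      proof (cases "n < 2^m0")
        case True
        then have "\<bar>\<Sum>i<n. D i \<omega>\<bar> \<le> C" unfolding C_def by (intro Max_ge) auto
        then show ?thesis using pnn by linarith
      next
        case False
        have C0: "0 \<le> C"
        proof -
          have "(\<lambda>n. \<bar>\<Sum>i<n. D i \<omega>\<bar>) 0 \<in> (\<lambda>n. \<bar>\<Sum>i<n. D i \<omega>\<bar>) ` {..<2^m0}" by (rule imageI) simp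
          then have "(\<lambda>n. \<bar>\<Sum>i<n. D i \<omega>\<bar>) 0 \<le> C" unfolding C_def by (intro Max_ge) auto
          then show ?thesis by simp
        qed
        have n1: "1 \<le> n" using False by (metis less_one not_less one_le_numeral one_le_power order_trans)
        obtain m where m: "n \<le> 2^m" "2^m < 2*n" using ex_pow2[OF n1] by blast
        have "(2::nat)^m0 \<le> 2^m" using False m(1) by linarith
        then have mm0: "m0 \<le> m" by (simp add: power_increasing_iff)
        have Sp_eq: "Sp 0 n \<omega> = (\<Sum>i<n. D i \<omega>)" unfolding Sp_def by (simp add: atLeast0LessThan)
        have "(\<Sum>i<n. D i \<omega>)\<^sup>2 \<le> thr m" using Q_ge[OF m(1), of 0 \<omega>] m0[OF mm0] Sp_eq by simp
        also have "thr m \<le> (2 * real n) powr (1 + 2*\<delta>)" unfolding thr_def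
        proof -
          have "2^m \<le> 2*n" using m(2) by simp
          then have "real (2^m) \<le> real (2*n)" by (simp only: of_nat_le_iff)
          then have "(2::real)^m \<le> 2 * real n" by simp
          then show "((2::real)^m) powr (1 + 2*\<delta>) \<le> (2 * real n) powr (1 + 2*\<delta>)"
            using \<delta> by (intro powr_mono2) auto
        qed
        also have "\<dots> = ((2 * real n) powr (1/2 + \<delta>))\<^sup>2"
          by (simp add: power2_eq_square powr_add[symmetric])
        finally have "\<bar>\<Sum>i<n. D i \<omega>\<bar>\<^sup>2 \<le> ((2 * real n) powr (1/2 + \<delta>))\<^sup>2" by simp
        then have "\<bar>\<Sum>i<n. D i \<omega>\<bar> \<le> (2 * real n) powr (1/2 + \<delta>)"
          by (rule power2_le_imp_le) simp
        then show ?thesis using C0 by linarith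
      qed
    qed
  qed
qed

end


locale model = prob_space M for M :: "'a measure" +
  fixes X Z :: "nat \<Rightarrow> 'a \<Rightarrow> nat" and B :: "nat \<Rightarrow> 'a \<Rightarrow> bool"
    and U :: "nat \<Rightarrow> nat \<Rightarrow> 'a \<Rightarrow> real" and p :: real and Mx :: nat
  assumes indep: "indep_vars (\<lambda>_. borel) (model_vars X Z B U) UNIV"
    and X_id: "\<And>n. distr M (count_space UNIV) (X n) = distr M (count_space UNIV) (X 0)"
    and Z_id: "\<And>n. distr M (count_space UNIV) (Z n) = distr M (count_space UNIV) (Z 0)"
    and B_law: "\<And>n. measure M {\<omega> \<in> space M. B n \<omega>} = p"
    and U_law: "\<And>n k. distr M lborel (U n k) = uniform_measure lborel {0..1}"
    and pos: "AE \<omega> in M. \<forall>n. 0 < X n \<omega> \<and> 0 < Z n \<omega>"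
    and X_bdd: "AE \<omega> in M. \<forall>n. X n \<omega> \<le> Mx"
    and Z2: "integrable M (\<lambda>\<omega>. (real (Z 0 \<omega>))\<^sup>2)"
begin

lemma rv: "model_vars X Z B U i \<in> borel_measurable M"
  using indep unfolding indep_vars_def by auto

lemma X_meas_r[measurable]: "(\<lambda>\<omega>. real (X n \<omega>)) \<in> borel_measurable M"
  using rv[of "SX n"] by simp
lemma Z_meas_r[measurable]: "(\<lambda>\<omega>. real (Z n \<omega>)) \<in> borel_measurable M"
  using rv[of "SZ n"] by simp
lemma B_meas_r[measurable]: "(\<lambda>\<omega>. of_bool (B n \<omega>) :: real) \<in> borel_measurable M"
  using rv[of "SB n"] by simp
lemma U_meas[measurable]: "U n k \<in> borel_measurable M"
  using rv[of "SU n k"] by simp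

lemma B_pred[measurable]: "Measurable.pred M (B n)"
proof -
  have "{\<omega> \<in> space M. B n \<omega>} = {\<omega> \<in> space M. (of_bool (B n \<omega>) :: real) = 1}" by auto
  also have "\<dots> \<in> sets M" by measurable
  finally show ?thesis by (simp add: pred_def)
qed

lemma nat_meas:
  assumes [measurable]: "(\<lambda>\<omega>. real (g \<omega>)) \<in> borel_measurable M"
  shows "g \<in> M \<rightarrow>\<^sub>M count_space UNIV"
proof (subst measurable_count_space_eq2_countable, safe)
  fix a :: nat
  have "g -` {a} \<inter> space M = {\<omega> \<in> space M. real (g \<omega>) = real a}" by auto
  also have "\<dots> \<in> sets M" by measurable
  finally show "g -` {a} \<inter> space M \<in> sets M" .
qed auto

lemma X_meas[measurable]: "X n \<in> M \<rightarrow>\<^sub>M count_space UNIV" by (rule nat_meas) simp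
lemma Z_meas[measurable]: "Z n \<in> M \<rightarrow>\<^sub>M count_space UNIV" by (rule nat_meas) simp

lemma X_transfer:
  fixes g :: "nat \<Rightarrow> real"
  shows "integral\<^sup>L M (\<lambda>\<omega>. g (X n \<omega>)) = integral\<^sup>L M (\<lambda>\<omega>. g (X 0 \<omega>))"
    and "integrable M (\<lambda>\<omega>. g (X n \<omega>)) = integrable M (\<lambda>\<omega>. g (X 0 \<omega>))"
proof -
  have gm: "g \<in> borel_measurable (count_space UNIV)" by simp
  have "integral\<^sup>L M (\<lambda>\<omega>. g (X n \<omega>)) = integral\<^sup>L (distr M (count_space UNIV) (X n)) g"
    by (rule integral_distr[OF X_meas gm, symmetric])
  also have "\<dots> = integral\<^sup>L (distr M (count_space UNIV) (X 0)) g" by (simp only: X_id[of n])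
  also have "\<dots> = integral\<^sup>L M (\<lambda>\<omega>. g (X 0 \<omega>))" by (rule integral_distr[OF X_meas gm])
  finally show "integral\<^sup>L M (\<lambda>\<omega>. g (X n \<omega>)) = integral\<^sup>L M (\<lambda>\<omega>. g (X 0 \<omega>))" .
  have "integrable M (\<lambda>\<omega>. g (X n \<omega>)) = integrable (distr M (count_space UNIV) (X n)) g"
    by (rule integrable_distr_eq[OF X_meas gm, symmetric])
  also have "\<dots> = integrable (distr M (count_space UNIV) (X 0)) g" by (simp only: X_id[of n])
  also have "\<dots> = integrable M (\<lambda>\<omega>. g (X 0 \<omega>))" by (rule integrable_distr_eq[OF X_meas gm])
  finally show "integrable M (\<lambda>\<omega>. g (X n \<omega>)) = integrable M (\<lambda>\<omega>. g (X 0 \<omega>))" .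
qed

lemma Z_transfer:
  fixes g :: "nat \<Rightarrow> real"
  shows "integral\<^sup>L M (\<lambda>\<omega>. g (Z n \<omega>)) = integral\<^sup>L M (\<lambda>\<omega>. g (Z 0 \<omega>))"
    and "integrable M (\<lambda>\<omega>. g (Z n \<omega>)) = integrable M (\<lambda>\<omega>. g (Z 0 \<omega>))"
proof -
  have gm: "g \<in> borel_measurable (count_space UNIV)" by simp
  have "integral\<^sup>L M (\<lambda>\<omega>. g (Z n \<omega>)) = integral\<^sup>L (distr M (count_space UNIV) (Z n)) g"
    by (rule integral_distr[OF Z_meas gm, symmetric])
  also have "\<dots> = integral\<^sup>L (distr M (count_space UNIV) (Z 0)) g" by (simp only: Z_id[of n])
  also have "\<dots> = integral\<^sup>L M (\<lambda>\<omega>. g (Z 0 \<omega>))" by (rule integral_distr[OF Z_meas gm])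
  finally show "integral\<^sup>L M (\<lambda>\<omega>. g (Z n \<omega>)) = integral\<^sup>L M (\<lambda>\<omega>. g (Z 0 \<omega>))" .
  have "integrable M (\<lambda>\<omega>. g (Z n \<omega>)) = integrable (distr M (count_space UNIV) (Z n)) g"
    by (rule integrable_distr_eq[OF Z_meas gm, symmetric])
  also have "\<dots> = integrable (distr M (count_space UNIV) (Z 0)) g" by (simp only: Z_id[of n])
  also have "\<dots> = integrable M (\<lambda>\<omega>. g (Z 0 \<omega>))" by (rule integrable_distr_eq[OF Z_meas gm])
  finally show "integrable M (\<lambda>\<omega>. g (Z n \<omega>)) = integrable M (\<lambda>\<omega>. g (Z 0 \<omega>))" .
qed

lemma Z2_int: "integrable M (\<lambda>\<omega>. (real (Z n \<omega>))\<^sup>2)"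
  using Z_transfer(2)[of "\<lambda>z. (real z)\<^sup>2" n] Z2 by simp

lemma Z_int: "integrable M (\<lambda>\<omega>. real (Z n \<omega>))"
proof (rule Bochner_Integration.integrable_bound[OF Z2_int[of n]])
  show "AE \<omega> in M. norm (real (Z n \<omega>)) \<le> norm ((real (Z n \<omega>))\<^sup>2)"
  proof (rule AE_I2)
    fix \<omega> show "norm (real (Z n \<omega>)) \<le> norm ((real (Z n \<omega>))\<^sup>2)"
      by (cases "Z n \<omega>") (auto simp: power2_eq_square)
  qed
qed simp

lemma X_int: "integrable M (\<lambda>\<omega>. real (X n \<omega>))"
  by (rule integrable_const_bound[where B="real Mx"]) (use X_bdd in \<open>auto elim: eventually_mono\<close>)

lemma EX_eq: "expectation (\<lambda>\<omega>. real (X n \<omega>)) = expectation (\<lambda>\<omega>. real (X 0 \<omega>))"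
  using X_transfer(1)[of real n] by simp
lemma EZ_eq: "expectation (\<lambda>\<omega>. real (Z n \<omega>)) = expectation (\<lambda>\<omega>. real (Z 0 \<omega>))"
  using Z_transfer(1)[of real n] by simp
lemma EZ2_eq: "expectation (\<lambda>\<omega>. (real (Z n \<omega>))\<^sup>2) = expectation (\<lambda>\<omega>. (real (Z 0 \<omega>))\<^sup>2)"
  using Z_transfer(1)[of "\<lambda>z. (real z)\<^sup>2" n] by simp

lemma prob_U:
  assumes [measurable]: "A \<in> sets borel"
  shows "prob {\<omega> \<in> space M. U n k \<omega> \<in> A} = measure lborel (A \<inter> {0..1})"
proof -
  have "prob {\<omega> \<in> space M. U n k \<omega> \<in> A} = measure (distr M lborel (U n k)) A"
    by (subst measure_distr) (auto simp: vimage_def Int_def conj_commute)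
  also have "\<dots> = measure (uniform_measure lborel {0..1}) A" by (simp add: U_law)
  also have "\<dots> = measure lborel (A \<inter> {0..1})"
    by (simp add: measure_def emeasure_uniform_measure Int_commute divide_ennreal_def)
  finally show ?thesis .
qed

end


lemma sum_of_bool_ennreal: "finite A \<Longrightarrow> (\<Sum>x\<in>A. of_bool (P x) :: ennreal) = of_nat (card {x\<in>A. P x})"
  by (simp add: sum.inter_filter[symmetric] Int_def)

context model begin

definition muX where "muX = expectation (\<lambda>\<omega>. real (X 0 \<omega>))"
definition muZ where "muZ = expectation (\<lambda>\<omega>. real (Z 0 \<omega>))"

lemma indep_UB:
  fixes k :: nat and f :: real
  shows "prob {\<omega> \<in> space M. B n \<omega> \<and> k < Z n \<omega> \<and> U n k \<omega> < f}
       = p * prob {\<omega> \<in> space M. k < Z n \<omega>} * prob {\<omega> \<in> space M. U n k \<omega> < f}"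
proof -
  define J where "J = {SB n, SZ n, SU n k}"
  define A where "A i = (case i of SB _ \<Rightarrow> {1} | SZ _ \<Rightarrow> {real k<..} | SU _ _ \<Rightarrow> {..<f} | SX _ \<Rightarrow> UNIV)" for i
  have "prob (\<Inter>i\<in>J. model_vars X Z B U i -` A i \<inter> space M) = (\<Prod>i\<in>J. prob (model_vars X Z B U i -` A i \<inter> space M))"
    by (rule indep_varsD[OF indep]) (auto simp: J_def A_def split: src.split)
  moreover have "(\<Inter>i\<in>J. model_vars X Z B U i -` A i \<inter> space M) = {\<omega> \<in> space M. B n \<omega> \<and> k < Z n \<omega> \<and> U n k \<omega> < f}"
    by (auto simp: J_def A_def)
  moreover have "model_vars X Z B U (SB n) -` A (SB n) \<inter> space M = {\<omega> \<in> space M. B n \<omega>}"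
    by (auto simp: A_def)
  moreover have "model_vars X Z B U (SZ n) -` A (SZ n) \<inter> space M = {\<omega> \<in> space M. k < Z n \<omega>}"
    by (auto simp: A_def)
  moreover have "model_vars X Z B U (SU n k) -` A (SU n k) \<inter> space M = {\<omega> \<in> space M. U n k \<omega> < f}"
    by (auto simp: A_def)
  ultimately show ?thesis by (simp add: J_def B_law)
qed

lemma nn_Z: "(\<integral>\<^sup>+\<omega>. ennreal (real (Z n \<omega>)) \<partial>M) = (\<Sum>k. ennreal (prob {\<omega> \<in> space M. k < Z n \<omega>}))"
proof -
  have "(\<integral>\<^sup>+\<omega>. ennreal (real (Z n \<omega>)) \<partial>M) = (\<integral>\<^sup>+\<omega>. (\<Sum>k. indicator {\<omega> \<in> space M. k < Z n \<omega>} \<omega>) \<partial>M)"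
  proof (rule nn_integral_cong)
    fix \<omega> assume \<omega>: "\<omega> \<in> space M"
    have "(\<Sum>k. indicator {\<omega> \<in> space M. k < Z n \<omega>} \<omega> :: ennreal) = (\<Sum>k\<in>{..<Z n \<omega>}. indicator {\<omega> \<in> space M. k < Z n \<omega>} \<omega>)"
      by (rule suminf_finite) (auto simp: indicator_def)
    also have "\<dots> = (\<Sum>k\<in>{..<Z n \<omega>}. 1)" using \<omega> by (intro sum.cong) (auto simp: indicator_def)
    finally show "ennreal (real (Z n \<omega>)) = (\<Sum>k. indicator {\<omega> \<in> space M. k < Z n \<omega>} \<omega>)" by (simp add: ennreal_of_nat_eq_real_of_nat)
  qed
  also have "\<dots> = (\<Sum>k. \<integral>\<^sup>+\<omega>. indicator {\<omega> \<in> space M. k < Z n \<omega>} \<omega> \<partial>M)"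
    by (rule nn_integral_suminf) measurable
  also have "\<dots> = (\<Sum>k. ennreal (prob {\<omega> \<in> space M. k < Z n \<omega>}))"
    by (subst nn_integral_indicator) (auto simp: emeasure_eq_measure)
  finally show ?thesis .
qed


lemma sum_of_bool_real: "finite A \<Longrightarrow> (\<Sum>x\<in>A. of_bool (P x) :: real) = real (card {x\<in>A. P x})"
  by (simp add: sum.inter_filter[symmetric] Int_def)

definition W :: "nat \<Rightarrow> real \<Rightarrow> 'a \<Rightarrow> real" where
  "W n f \<omega> = real (card {k. k < Z n \<omega> \<and> U n k \<omega> < f})"

lemma W_alt: "W n f \<omega> = (\<Sum>k<Z n \<omega>. of_bool (U n k \<omega> < f))"
  unfolding W_def by (subst sum_of_bool_real) (auto intro!: arg_cong[where f=card])

lemma W_meas[measurable]: "W n f \<in> borel_measurable M"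
proof -
  have "(\<lambda>\<omega>. (\<lambda>z \<omega>. (\<Sum>k<z. of_bool (U n k \<omega> < f) :: real)) (Z n \<omega>) \<omega>) \<in> borel_measurable M"
    by (rule measurable_compose_countable'[where I=UNIV]) auto
  then show ?thesis unfolding W_alt[abs_def] by simp
qed

lemma W_le: "0 \<le> W n f \<omega>" "W n f \<omega> \<le> real (Z n \<omega>)"
proof -
  have "card {k. k < Z n \<omega> \<and> U n k \<omega> < f} \<le> card {..<Z n \<omega>}" by (rule card_mono) auto
  then show "W n f \<omega> \<le> real (Z n \<omega>)" unfolding W_def by simp
qed (simp add: W_def)

lemma prob_U_less: "0 \<le> f \<Longrightarrow> f \<le> 1 \<Longrightarrow> prob {\<omega> \<in> space M. U n k \<omega> < f} = f"
proof -
  assume f: "0 \<le> f" "f \<le> 1"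
  have "prob {\<omega> \<in> space M. U n k \<omega> < f} = prob {\<omega> \<in> space M. U n k \<omega> \<in> {..<f}}" by simp
  also have "\<dots> = measure lborel ({..<f} \<inter> {0..1})" by (rule prob_U) simp
  also have "{..<f} \<inter> {0..1} = {0..<f}" using f by auto
  finally show ?thesis using f by simp
qed

lemma p_nonneg: "0 \<le> p" using B_law[of 0] measure_nonneg by metis

lemma muZ_nonneg: "0 \<le> muZ" unfolding muZ_def by (rule integral_nonneg_AE) simp

lemma EBW:
  assumes f: "0 \<le> f" "f \<le> 1"
  shows "integrable M (\<lambda>\<omega>. of_bool (B n \<omega>) * W n f \<omega>)"
    and "expectation (\<lambda>\<omega>. of_bool (B n \<omega>) * W n f \<omega>) = p * f * muZ"
proof -
  show int: "integrable M (\<lambda>\<omega>. of_bool (B n \<omega>) * W n f \<omega>)"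
    by (rule Bochner_Integration.integrable_bound[OF Z_int[of n]]) (auto intro!: AE_I2 simp: W_le)
  define E where "E k = {\<omega> \<in> space M. B n \<omega> \<and> k < Z n \<omega> \<and> U n k \<omega> < f}" for k
  have "(\<integral>\<^sup>+\<omega>. ennreal (of_bool (B n \<omega>) * W n f \<omega>) \<partial>M) = (\<integral>\<^sup>+\<omega>. (\<Sum>k. indicator (E k) \<omega>) \<partial>M)"
  proof (rule nn_integral_cong)
    fix \<omega> assume \<omega>: "\<omega> \<in> space M"
    have "(\<Sum>k. indicator (E k) \<omega> :: ennreal) = (\<Sum>k\<in>{..<Z n \<omega>}. indicator (E k) \<omega>)"
      by (rule suminf_finite) (auto simp: indicator_def E_def)
    also have "\<dots> = (\<Sum>k\<in>{..<Z n \<omega>}. of_bool (B n \<omega> \<and> U n k \<omega> < f))"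
      using \<omega> by (intro sum.cong) (auto simp: indicator_def E_def)
    also have "\<dots> = of_nat (card {k \<in> {..<Z n \<omega>}. B n \<omega> \<and> U n k \<omega> < f})"
      by (rule sum_of_bool_ennreal) simp
    also have "\<dots> = ennreal (of_bool (B n \<omega>) * W n f \<omega>)"
      by (cases "B n \<omega>") (auto simp: W_def ennreal_of_nat_eq_real_of_nat intro!: arg_cong[where f=card])
    finally show "ennreal (of_bool (B n \<omega>) * W n f \<omega>) = (\<Sum>k. indicator (E k) \<omega>)" by simp
  qed
  also have "\<dots> = (\<Sum>k. \<integral>\<^sup>+\<omega>. indicator (E k) \<omega> \<partial>M)"
    by (rule nn_integral_suminf) (simp add: E_def)
  also have "\<dots> = (\<Sum>k. ennreal (p * f) * ennreal (prob {\<omega> \<in> space M. k < Z n \<omega>}))"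
  proof (rule suminf_cong)
    fix k
    have "(\<integral>\<^sup>+\<omega>. indicator (E k) \<omega> \<partial>M) = ennreal (prob (E k))"
      by (subst nn_integral_indicator) (auto simp: emeasure_eq_measure E_def)
    also have "prob (E k) = p * prob {\<omega> \<in> space M. k < Z n \<omega>} * f"
      unfolding E_def using indep_UB prob_U_less[OF f] by simp
    finally show "(\<integral>\<^sup>+\<omega>. indicator (E k) \<omega> \<partial>M) = ennreal (p * f) * ennreal (prob {\<omega> \<in> space M. k < Z n \<omega>})"
      using p_nonneg f by (simp add: ennreal_mult[symmetric] mult_ac)
  qed
  also have "\<dots> = ennreal (p * f) * (\<integral>\<^sup>+\<omega>. ennreal (real (Z n \<omega>)) \<partial>M)"
    by (simp add: ennreal_suminf_cmult nn_Z)
  also have "(\<integral>\<^sup>+\<omega>. ennreal (real (Z n \<omega>)) \<partial>M) = ennreal muZ"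
    using nn_integral_eq_integral[OF Z_int[of n]] EZ_eq[of n] by (simp add: muZ_def)
  finally have "(\<integral>\<^sup>+\<omega>. ennreal (of_bool (B n \<omega>) * W n f \<omega>) \<partial>M) = ennreal (p * f) * ennreal muZ" .
  moreover have "(\<integral>\<^sup>+\<omega>. ennreal (of_bool (B n \<omega>) * W n f \<omega>) \<partial>M) = ennreal (expectation (\<lambda>\<omega>. of_bool (B n \<omega>) * W n f \<omega>))"
    by (rule nn_integral_eq_integral[OF int]) (auto simp: W_le)
  moreover have "0 \<le> expectation (\<lambda>\<omega>. of_bool (B n \<omega>) * W n f \<omega>)"
    by (rule integral_nonneg_AE) (auto simp: W_le)
  ultimately show "expectation (\<lambda>\<omega>. of_bool (B n \<omega>) * W n f \<omega>) = p * f * muZ"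
    using p_nonneg f muZ_nonneg by (simp add: ennreal_mult[symmetric])
qed

end


context model begin

lemma E_of_bool:
  assumes [measurable]: "Measurable.pred M P"
  shows "expectation (\<lambda>\<omega>. of_bool (P \<omega>) :: real) = prob {\<omega> \<in> space M. P \<omega>}"
proof -
  have "expectation (\<lambda>\<omega>. of_bool (P \<omega>) :: real) = expectation (indicator {\<omega> \<in> space M. P \<omega>})"
    by (rule Bochner_Integration.integral_cong[OF refl]) (auto simp: indicator_def)
  also have "\<dots> = prob {\<omega> \<in> space M. P \<omega>}" by (simp add: emeasure_eq_measure)
  finally show ?thesis .
qed

lemma E_notB_X: "expectation (\<lambda>\<omega>. (1 - of_bool (B n \<omega>)) * real (X n \<omega>)) = (1 - p) * muX"
proof -
  define g where "g i = (case i of SB _ \<Rightarrow> (\<lambda>r::real. 1 - r) | _ \<Rightarrow> (\<lambda>r. r))" for i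
  have ind: "indep_vars (\<lambda>_. borel) (\<lambda>i \<omega>. g i (model_vars X Z B U i \<omega>)) UNIV"
    by (rule indep_vars_compose2[OF indep]) (auto simp: g_def split: src.split)
  have ind2: "indep_vars (\<lambda>_. borel) (\<lambda>i \<omega>. g i (model_vars X Z B U i \<omega>)) {SB n, SX n}"
    by (rule indep_vars_subset[OF ind]) auto
  have "expectation (\<lambda>\<omega>. \<Prod>i\<in>{SB n, SX n}. g i (model_vars X Z B U i \<omega>))
      = (\<Prod>i\<in>{SB n, SX n}. expectation (\<lambda>\<omega>. g i (model_vars X Z B U i \<omega>)))"
  proof (rule indep_vars_lebesgue_integral[OF _ ind2])
    have "integrable M (\<lambda>\<omega>. 1 - of_bool (B n \<omega>) :: real)" by (rule integrable_const_bound[where B=1]) auto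
    then show "\<And>i. i \<in> {SB n, SX n} \<Longrightarrow> integrable M (\<lambda>\<omega>. g i (model_vars X Z B U i \<omega>))"
      by (auto simp: g_def X_int)
  qed simp
  moreover have "expectation (\<lambda>\<omega>. 1 - of_bool (B n \<omega>) :: real) = 1 - p"
  proof -
    have "expectation (\<lambda>\<omega>. 1 - of_bool (B n \<omega>) :: real) = expectation (\<lambda>\<omega>. 1) - expectation (\<lambda>\<omega>. of_bool (B n \<omega>) :: real)"
      by (rule Bochner_Integration.integral_diff) (auto intro: integrable_const_bound[where B=1])
    then show ?thesis using E_of_bool[of "B n"] by (simp add: B_law prob_space)
  qed
  ultimately show ?thesis using EX_eq[of n] by (simp add: g_def muX_def)
qed

lemma pair_indep:
  fixes V :: "nat \<Rightarrow> 'a \<Rightarrow> real" and \<Phi> :: "nat \<Rightarrow> (src \<Rightarrow> real) \<Rightarrow> real" and blk :: "nat \<Rightarrow> src set"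
  assumes \<Phi>m: "\<And>n. \<Phi> n \<in> PiM (blk n) (\<lambda>_. borel) \<rightarrow>\<^sub>M borel"
  and Veq: "\<And>n \<omega>. V n \<omega> = \<Phi> n (restrict (\<lambda>i. model_vars X Z B U i \<omega>) (blk n))"
  and disj: "blk n \<inter> blk m = {}"
  shows "indep_var borel (V n) borel (V m)"
proof -
  have "indep_var (PiM (blk n) (\<lambda>_. borel)) (\<lambda>\<omega>. restrict (\<lambda>i. model_vars X Z B U i \<omega>) (blk n))
                  (PiM (blk m) (\<lambda>_. borel)) (\<lambda>\<omega>. restrict (\<lambda>i. model_vars X Z B U i \<omega>) (blk m))"
    by (rule indep_var_restrict[OF indep disj]) auto
  then have "indep_var borel (\<Phi> n \<circ> (\<lambda>\<omega>. restrict (\<lambda>i. model_vars X Z B U i \<omega>) (blk n)))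
                       borel (\<Phi> m \<circ> (\<lambda>\<omega>. restrict (\<lambda>i. model_vars X Z B U i \<omega>) (blk m)))"
    by (rule indep_var_compose[OF _ \<Phi>m \<Phi>m])
  moreover have "\<And>n. \<Phi> n \<circ> (\<lambda>\<omega>. restrict (\<lambda>i. model_vars X Z B U i \<omega>) (blk n)) = V n"
    by (auto simp: Veq fun_eq_iff)
  ultimately show ?thesis by simp
qed

definition D :: "real \<Rightarrow> nat \<Rightarrow> 'a \<Rightarrow> real" where
  "D f n \<omega> = of_bool (B n \<omega>) * W n f \<omega> - (1 - of_bool (B n \<omega>)) * real (X n \<omega>)"

lemma D_meas[measurable]: "D f n \<in> borel_measurable M" unfolding D_def by measurable

definition blkD :: "nat \<Rightarrow> src set" where "blkD n = {SX n, SZ n, SB n} \<union> range (SU n)"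

definition PhiD :: "real \<Rightarrow> nat \<Rightarrow> (src \<Rightarrow> real) \<Rightarrow> real" where
  "PhiD f n g = of_bool (g (SB n) = 1) * (\<Sum>k<nat \<lfloor>g (SZ n)\<rfloor>. of_bool (g (SU n k) < f)) - (1 - of_bool (g (SB n) = 1)) * g (SX n)"

lemma PhiD_meas: "PhiD f n \<in> PiM (blkD n) (\<lambda>_. borel) \<rightarrow>\<^sub>M borel"
proof -
  have c: "(\<lambda>g. g i) \<in> PiM (blkD n) (\<lambda>_. borel) \<rightarrow>\<^sub>M (borel :: real measure)" if "i \<in> blkD n" for i
    using measurable_component_singleton[OF that, of "\<lambda>_. borel"] by simp
  have z: "(\<lambda>g::src \<Rightarrow> real. nat \<lfloor>g (SZ n)\<rfloor>) \<in> PiM (blkD n) (\<lambda>_. borel) \<rightarrow>\<^sub>M count_space UNIV"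
  proof -
    have fl: "(\<lambda>x::real. nat \<lfloor>x\<rfloor>) \<in> borel \<rightarrow>\<^sub>M count_space UNIV"
      by (rule measurable_compose[OF measurable_real_floor]) simp
    have "SZ n \<in> blkD n" by (simp add: blkD_def)
    from measurable_compose[OF c[OF this] fl] show ?thesis .
  qed
  have s: "(\<lambda>g. (\<Sum>k<j. of_bool (g (SU n k) < f) :: real)) \<in> borel_measurable (PiM (blkD n) (\<lambda>_. borel))" for j
  proof -
    have [measurable]: "(\<lambda>g. g (SU n k)) \<in> PiM (blkD n) (\<lambda>_. borel) \<rightarrow>\<^sub>M (borel :: real measure)" for k
      using c by (simp add: blkD_def)
    show ?thesis by measurable
  qed
  have "(\<lambda>g. (\<lambda>j g. (\<Sum>k<j. of_bool (g (SU n k) < f) :: real)) (nat \<lfloor>g (SZ n)\<rfloor>) g) \<in> borel_measurable (PiM (blkD n) (\<lambda>_. borel))"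
    by (rule measurable_compose_countable'[OF s z]) auto
  then have [measurable]: "(\<lambda>g. (\<Sum>k<nat \<lfloor>g (SZ n)\<rfloor>. of_bool (g (SU n k) < f) :: real)) \<in> borel_measurable (PiM (blkD n) (\<lambda>_. borel))"
    by simp
  have [measurable]: "(\<lambda>g. g (SB n)) \<in> PiM (blkD n) (\<lambda>_. borel) \<rightarrow>\<^sub>M (borel :: real measure)"
    "(\<lambda>g. g (SX n)) \<in> PiM (blkD n) (\<lambda>_. borel) \<rightarrow>\<^sub>M (borel :: real measure)"
    using c by (simp_all add: blkD_def)
  show ?thesis unfolding PhiD_def by measurable
qed

lemma D_eq: "D f n \<omega> = PhiD f n (restrict (\<lambda>i. model_vars X Z B U i \<omega>) (blkD n))"
  by (simp add: D_def PhiD_def blkD_def W_alt)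

lemma D_indep: "n \<noteq> m \<Longrightarrow> indep_var borel (D f n) borel (D f m)"
  by (rule pair_indep[OF PhiD_meas D_eq]) (auto simp: blkD_def)

end


context model begin

lemma l2seq_intro:
  fixes V :: "nat \<Rightarrow> 'a \<Rightarrow> real"
  assumes meas: "\<And>n. V n \<in> borel_measurable M" and int2: "\<And>n. integrable M (\<lambda>\<omega>. (V n \<omega>)\<^sup>2)"
    and var: "\<And>n. expectation (\<lambda>\<omega>. (V n \<omega>)\<^sup>2) \<le> \<sigma>" and mean: "\<And>n. expectation (V n) = 0"
    and ind: "\<And>n m. n \<noteq> m \<Longrightarrow> indep_var borel (V n) borel (V m)"
  shows "l2seq M V \<sigma>"
proof unfold_locales
  have int: "integrable M (V n)" for n by (rule square_integrable_imp_integrable[OF meas int2])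
  fix i j :: nat assume "i \<noteq> j"
  then show "expectation (\<lambda>\<omega>. V i \<omega> * V j \<omega>) = 0"
    using indep_var_lebesgue_integral[OF ind[OF \<open>i \<noteq> j\<close>] int int] mean by simp
qed (use meas int2 var in auto)

lemma muX_ge1: "1 \<le> muX"
proof -
  have "expectation (\<lambda>\<omega>. 1::real) \<le> muX" unfolding muX_def
    by (rule integral_mono_AE) (use X_int pos in \<open>auto elim!: eventually_mono simp: Suc_le_eq\<close>)
  then show ?thesis by (simp add: prob_space)
qed

lemma muZ_ge1: "1 \<le> muZ"
proof -
  have "expectation (\<lambda>\<omega>. 1::real) \<le> muZ" unfolding muZ_def
    by (rule integral_mono_AE) (use Z_int pos in \<open>auto elim!: eventually_mono simp: Suc_le_eq\<close>)
  then show ?thesis by (simp add: prob_space)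
qed

end

locale model_f = model +
  fixes f :: real
  assumes p_lt1: "p < 1"
    and p_gt: "muX / (muX + muZ) < p"
    and f_def: "f = ((1 - p) / p) * (muX / muZ)"
begin

lemma p_pos: "0 < p"
  using p_gt muX_ge1 muZ_ge1 by (smt (verit) divide_pos_pos)

lemma f_pos: "0 < f" unfolding f_def using p_pos p_lt1 muX_ge1 muZ_ge1 by simp

lemma f_lt1: "f < 1"
proof -
  have "muX < p * (muX + muZ)" using p_gt muX_ge1 muZ_ge1 by (simp add: divide_less_eq)
  then have "(1 - p) * muX < p * muZ" by (simp add: algebra_simps)
  then show ?thesis unfolding f_def using p_pos muZ_ge1 by (simp add: field_simps)
qed

lemma ED_zero: "expectation (D f n) = 0"
proof -
  have "expectation (D f n) = expectation (\<lambda>\<omega>. of_bool (B n \<omega>) * W n f \<omega>) - expectation (\<lambda>\<omega>. (1 - of_bool (B n \<omega>)) * real (X n \<omega>))"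
    unfolding D_def
  proof (rule Bochner_Integration.integral_diff)
    show "integrable M (\<lambda>\<omega>. of_bool (B n \<omega>) * W n f \<omega>)" using EBW f_pos f_lt1 by simp
    show "integrable M (\<lambda>\<omega>. (1 - of_bool (B n \<omega>)) * real (X n \<omega>))"
      by (rule Bochner_Integration.integrable_bound[OF X_int[of n]]) (auto intro!: AE_I2)
  qed
  also have "\<dots> = p * f * muZ - (1 - p) * muX" using EBW(2)[of f n] f_pos f_lt1 E_notB_X[of n] by simp
  also have "\<dots> = 0" unfolding f_def using p_pos muZ_ge1 by (simp add: field_simps)
  finally show ?thesis .
qed

definition sigD where "sigD = expectation (\<lambda>\<omega>. (real (Z 0 \<omega>))\<^sup>2) + (real Mx)\<^sup>2"

lemma D_sq_le: "AE \<omega> in M. (D f n \<omega>)\<^sup>2 \<le> (real (Z n \<omega>))\<^sup>2 + (real Mx)\<^sup>2"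
  using X_bdd
proof eventually_elim
  case (elim \<omega>)
  show ?case
  proof (cases "B n \<omega>")
    case True
    then have "(D f n \<omega>)\<^sup>2 = (W n f \<omega>)\<^sup>2" by (simp add: D_def)
    also have "\<dots> \<le> (real (Z n \<omega>))\<^sup>2" using W_le[of n f \<omega>] by (intro power_mono) auto
    finally show ?thesis using zero_le_power2[of "real Mx"] by linarith
  next
    case False
    then have "(D f n \<omega>)\<^sup>2 = (real (X n \<omega>))\<^sup>2" by (simp add: D_def)
    also have "\<dots> \<le> (real Mx)\<^sup>2" using elim by (intro power_mono) auto
    finally show ?thesis using zero_le_power2[of "real (Z n \<omega>)"] by linarith
  qed
qed

lemma D_l2: "l2seq M (D f) sigD"
proof (rule l2seq_intro)
  have ib: "integrable M (\<lambda>\<omega>. (real (Z n \<omega>))\<^sup>2 + (real Mx)\<^sup>2)" for n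
    by (rule Bochner_Integration.integrable_add[OF Z2_int]) simp
  show int2: "integrable M (\<lambda>\<omega>. (D f n \<omega>)\<^sup>2)" for n
    by (rule Bochner_Integration.integrable_bound[OF ib[of n]])
       (use D_sq_le[of n] in \<open>auto elim!: eventually_mono\<close>)
  show "expectation (\<lambda>\<omega>. (D f n \<omega>)\<^sup>2) \<le> sigD" for n
  proof -
    have "expectation (\<lambda>\<omega>. (D f n \<omega>)\<^sup>2) \<le> expectation (\<lambda>\<omega>. (real (Z n \<omega>))\<^sup>2 + (real Mx)\<^sup>2)"
      by (rule integral_mono_AE[OF int2 ib D_sq_le])
    also have "\<dots> = sigD" using EZ2_eq[of n] by (simp add: sigD_def Z2_int prob_space)
    finally show ?thesis .
  qed
qed (auto simp: ED_zero D_indep)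


definition Dz :: "nat \<Rightarrow> 'a \<Rightarrow> real" where "Dz n \<omega> = real (Z n \<omega>) - muZ"

lemma Dz_meas[measurable]: "Dz n \<in> borel_measurable M" unfolding Dz_def by measurable

lemma Dz_l2: "l2seq M Dz (2 * expectation (\<lambda>\<omega>. (real (Z 0 \<omega>))\<^sup>2) + 2 * muZ\<^sup>2)"
proof (rule l2seq_intro)
  have ib: "integrable M (\<lambda>\<omega>. 2 * (real (Z n \<omega>))\<^sup>2 + 2 * muZ\<^sup>2)" for n
    by (intro Bochner_Integration.integrable_add integrable_mult_right Z2_int) simp
  have le: "(Dz n \<omega>)\<^sup>2 \<le> 2 * (real (Z n \<omega>))\<^sup>2 + 2 * muZ\<^sup>2" for n \<omega>
  proof -
    have "0 \<le> (real (Z n \<omega>) + muZ)\<^sup>2" by simp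
    then show ?thesis unfolding Dz_def by (simp add: power2_eq_square algebra_simps)
  qed
  show int2: "integrable M (\<lambda>\<omega>. (Dz n \<omega>)\<^sup>2)" for n
    by (rule Bochner_Integration.integrable_bound[OF ib[of n]]) (auto intro!: AE_I2 simp: le order_trans[OF le])
  show "expectation (\<lambda>\<omega>. (Dz n \<omega>)\<^sup>2) \<le> 2 * expectation (\<lambda>\<omega>. (real (Z 0 \<omega>))\<^sup>2) + 2 * muZ\<^sup>2" for n
  proof -
    have "expectation (\<lambda>\<omega>. (Dz n \<omega>)\<^sup>2) \<le> expectation (\<lambda>\<omega>. 2 * (real (Z n \<omega>))\<^sup>2 + 2 * muZ\<^sup>2)"
      by (rule integral_mono[OF int2 ib le])
    also have "\<dots> = 2 * expectation (\<lambda>\<omega>. (real (Z 0 \<omega>))\<^sup>2) + 2 * muZ\<^sup>2"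
      using EZ2_eq[of n] by (simp add: Z2_int prob_space)
    finally show ?thesis .
  qed
  show "expectation (Dz n) = 0" for n
    unfolding Dz_def using EZ_eq[of n] by (simp add: Z_int prob_space muZ_def)
  show "Dz n \<in> borel_measurable M" for n unfolding Dz_def by measurable
  show "indep_var borel (Dz n) borel (Dz m)" if "n \<noteq> m" for n m
  proof (rule pair_indep[where blk="\<lambda>n. {SZ n}" and \<Phi>="\<lambda>n g. g (SZ n) - muZ"])
    show "(\<lambda>g. g (SZ n) - muZ) \<in> PiM {SZ n} (\<lambda>_. borel) \<rightarrow>\<^sub>M borel" for n
    proof -
      have [measurable]: "(\<lambda>g. g (SZ n)) \<in> PiM {SZ n} (\<lambda>_. borel) \<rightarrow>\<^sub>M (borel :: real measure)"
        by (rule measurable_component_singleton) simp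
      show ?thesis by measurable
    qed
  qed (use that in \<open>auto simp: Dz_def\<close>)
qed

definition Dg :: "nat \<Rightarrow> 'a \<Rightarrow> real" where
  "Dg n \<omega> = of_bool (B n \<omega> \<and> f \<le> U n 0 \<omega> \<and> U n 0 \<omega> \<le> 1) - p * (1 - f)"

lemma prob_BU: "prob {\<omega> \<in> space M. B n \<omega> \<and> f \<le> U n 0 \<omega> \<and> U n 0 \<omega> \<le> 1} = p * (1 - f)"
proof -
  define J where "J = {SB n, SU n 0}"
  define A where "A i = (case i of SB _ \<Rightarrow> {1} | SU _ _ \<Rightarrow> {f..1} | _ \<Rightarrow> UNIV)" for i
  have "prob (\<Inter>i\<in>J. model_vars X Z B U i -` A i \<inter> space M) = (\<Prod>i\<in>J. prob (model_vars X Z B U i -` A i \<inter> space M))"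
    by (rule indep_varsD[OF indep]) (auto simp: J_def A_def split: src.split)
  moreover have "(\<Inter>i\<in>J. model_vars X Z B U i -` A i \<inter> space M) = {\<omega> \<in> space M. B n \<omega> \<and> f \<le> U n 0 \<omega> \<and> U n 0 \<omega> \<le> 1}"
    by (auto simp: J_def A_def)
  moreover have "model_vars X Z B U (SB n) -` A (SB n) \<inter> space M = {\<omega> \<in> space M. B n \<omega>}"
    by (auto simp: A_def)
  moreover have "model_vars X Z B U (SU n 0) -` A (SU n 0) \<inter> space M = {\<omega> \<in> space M. U n 0 \<omega> \<in> {f..1}}"
    by (auto simp: A_def)
  moreover have "prob {\<omega> \<in> space M. U n 0 \<omega> \<in> {f..1}} = 1 - f"
  proof -
    have "prob {\<omega> \<in> space M. U n 0 \<omega> \<in> {f..1}} = measure lborel ({f..1} \<inter> {0..1})" by (rule prob_U) simp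
    also have "{f..1} \<inter> {0..1} = {f..1}" using f_pos by auto
    finally show ?thesis using f_lt1 by simp
  qed
  ultimately show ?thesis by (simp add: J_def B_law)
qed

lemma Dg_l2: "l2seq M Dg 1"
proof (rule l2seq_intro)
  have c: "0 \<le> p * (1 - f)" "p * (1 - f) \<le> 1"
    using p_pos p_lt1 f_pos f_lt1 by (auto simp: mult_le_one)
  have le: "(Dg n \<omega>)\<^sup>2 \<le> 1" for n \<omega>
  proof -
    have "\<bar>Dg n \<omega>\<bar> \<le> 1" unfolding Dg_def using c by auto
    then show ?thesis by (simp add: abs_le_square_iff[symmetric] power_le_one_iff abs_square_le_1)
  qed
  show meas: "Dg n \<in> borel_measurable M" for n unfolding Dg_def by measurable
  show int2: "integrable M (\<lambda>\<omega>. (Dg n \<omega>)\<^sup>2)" for n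
    by (rule integrable_const_bound[where B=1]) (use meas in \<open>auto simp: le\<close>)
  show "expectation (\<lambda>\<omega>. (Dg n \<omega>)\<^sup>2) \<le> 1" for n
    using integral_mono[OF int2 integrable_const le, of n] by (simp add: prob_space)
  show "expectation (Dg n) = 0" for n
  proof -
    have "expectation (Dg n) = expectation (\<lambda>\<omega>. of_bool (B n \<omega> \<and> f \<le> U n 0 \<omega> \<and> U n 0 \<omega> \<le> 1)) - expectation (\<lambda>\<omega>. p * (1 - f))"
      unfolding Dg_def by (rule Bochner_Integration.integral_diff) (auto intro!: integrable_const_bound[where B=1])
    also have "\<dots> = 0" by (subst E_of_bool) (auto simp: prob_BU prob_space)
    finally show ?thesis .
  qed
  show "indep_var borel (Dg n) borel (Dg m)" if "n \<noteq> m" for n m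
  proof (rule pair_indep[where blk="\<lambda>n. {SB n, SU n 0}" and \<Phi>="\<lambda>n g. of_bool (g (SB n) = 1 \<and> f \<le> g (SU n 0) \<and> g (SU n 0) \<le> 1) - p * (1 - f)"])
    show "(\<lambda>g. of_bool (g (SB n) = 1 \<and> f \<le> g (SU n 0) \<and> g (SU n 0) \<le> 1) - p * (1 - f)) \<in> PiM {SB n, SU n 0} (\<lambda>_. borel) \<rightarrow>\<^sub>M borel" for n
    proof -
      have [measurable]: "(\<lambda>g. g (SB n)) \<in> PiM {SB n, SU n 0} (\<lambda>_. borel) \<rightarrow>\<^sub>M (borel :: real measure)"
          "(\<lambda>g. g (SU n 0)) \<in> PiM {SB n, SU n 0} (\<lambda>_. borel) \<rightarrow>\<^sub>M (borel :: real measure)"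
        by (rule measurable_component_singleton; simp)+
      show ?thesis by measurable
    qed
  qed (use that in \<open>auto simp: Dg_def\<close>)
qed

end


definition phi :: "real \<Rightarrow> real \<Rightarrow> real" where
  "phi f t = (if f \<le> t then t else f + (1 - f) * t / f)"

lemma phi_meas[measurable]: "phi f \<in> borel_measurable borel"
  unfolding phi_def by measurable

lemma phi_set:
  fixes f x :: real assumes f: "0 < f" "f < 1"
  shows "x < f \<Longrightarrow> {t. phi f t \<le> x} \<inter> {0..1} = {}"
    and "1 \<le> x \<Longrightarrow> {t. phi f t \<le> x} \<inter> {0..1} = {0..1}"
    and "f \<le> x \<Longrightarrow> x < 1 \<Longrightarrow> {t. phi f t \<le> x} \<inter> {0..1} = {0..f * (x - f) / (1 - f)} \<union> {f..x}"
proof -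
  have ge: "f \<le> phi f t" if "0 \<le> t" for t
    using f that by (auto simp: phi_def)
  show "x < f \<Longrightarrow> {t. phi f t \<le> x} \<inter> {0..1} = {}" using ge by force
  have le1: "phi f t \<le> 1" if "0 \<le> t" "t \<le> 1" for t
  proof (cases "f \<le> t")
    case False
    have "(1-f)*t \<le> (1-f)*f" using False f by (intro mult_left_mono) auto
    then have "(1-f)*t/f \<le> 1-f" using f by (simp add: divide_le_eq)
    then show ?thesis using False by (simp add: phi_def)
  qed (use that in \<open>simp add: phi_def\<close>)
  show "1 \<le> x \<Longrightarrow> {t. phi f t \<le> x} \<inter> {0..1} = {0..1}" using le1 by force
  assume x: "f \<le> x" "x < 1"
  have a: "f * (x - f) / (1 - f) < f" using f x by (simp add: divide_less_eq algebra_simps)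
  show "{t. phi f t \<le> x} \<inter> {0..1} = {0..f * (x - f) / (1 - f)} \<union> {f..x}"
  proof (intro set_eqI iffI)
    fix t assume t: "t \<in> {t. phi f t \<le> x} \<inter> {0..1}"
    show "t \<in> {0..f * (x - f) / (1 - f)} \<union> {f..x}"
    proof (cases "f \<le> t")
      case True then show ?thesis using t by (auto simp: phi_def)
    next
      case False
      then have "f + (1 - f) * t / f \<le> x" using t by (auto simp: phi_def)
      then have "(1 - f) * t \<le> (x - f) * f" using f by (simp add: field_simps)
      then have "t \<le> f * (x - f) / (1 - f)" using f by (simp add: field_simps)
      then show ?thesis using t by auto
    qed
  next
    fix t assume t: "t \<in> {0..f * (x - f) / (1 - f)} \<union> {f..x}"
    show "t \<in> {t. phi f t \<le> x} \<inter> {0..1}"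
    proof (cases "t \<in> {f..x}")
      case True then show ?thesis using x f by (auto simp: phi_def)
    next
      case False
      then have t1: "0 \<le> t" "t \<le> f * (x - f) / (1 - f)" using t by auto
      then have tf: "\<not> f \<le> t" using a by auto
      have "(1 - f) * t \<le> (x - f) * f" using t1(2) f by (simp add: field_simps)
      then have "f + (1 - f) * t / f \<le> x" using f by (simp add: field_simps)
      then show ?thesis using tf t1 a f by (auto simp: phi_def)
    qed
  qed
qed

lemma phi_measure:
  fixes f x :: real assumes f: "0 < f" "f < 1"
  shows "measure lborel ({t. phi f t \<le> x} \<inter> {0..1}) = measure lborel ({f..1} \<inter> {..x}) / (1 - f)"
proof (cases "x < f")
  case True
  then have "{f..1} \<inter> {..x} = {}" by auto
  then show ?thesis using phi_set(1)[OF f True] by simp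
next
  case False
  show ?thesis
  proof (cases "1 \<le> x")
    case True
    then have "{f..1} \<inter> {..x} = {f..1}" by auto
    then show ?thesis using phi_set(2)[OF f True] f by simp
  next
    case x1: False
    have fx: "f \<le> x" "x < 1" using False x1 by auto
    define a where "a = f * (x - f) / (1 - f)"
    have a: "0 \<le> a" "a < f" using f fx by (auto simp: a_def divide_less_eq algebra_simps)
    have "emeasure lborel ({0..a} \<union> {f..x}) = emeasure lborel {0..a} + emeasure lborel {f..x}"
      by (rule plus_emeasure[symmetric]) (use a in auto)
    also have "\<dots> = ennreal (a + (x - f))" using a fx by (simp add: ennreal_plus)
    finally have "measure lborel ({0..a} \<union> {f..x}) = a + (x - f)"
      using a fx by (simp add: measure_def enn2real_plus)
    moreover have "a + (x - f) = (x - f) / (1 - f)" using f by (simp add: a_def field_simps)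
    moreover have "{f..1} \<inter> {..x} = {f..x}" using fx by auto
    ultimately show ?thesis using phi_set(3)[OF f fx] fx by (simp add: a_def)
  qed
qed


lemma (in prob_space) indep_vars_reindex:
  assumes ind: "indep_vars (\<lambda>_. N) V (h ` I)" and inj: "inj_on h I"
  shows "indep_vars (\<lambda>_. N) (\<lambda>i. V (h i)) I"
proof -
  define G where "G j = sigma_sets (space M) {V j -` A \<inter> space M | A. A \<in> sets N}" for j
  have rv: "\<forall>j\<in>h ` I. random_variable N (V j)" and IS: "indep_sets G (h ` I)"
    using ind unfolding indep_vars_def G_def by auto
  have "indep_sets (\<lambda>i. G (h i)) I"
  proof (rule indep_setsI)
    fix i assume "i \<in> I" then show "G (h i) \<subseteq> events" using IS unfolding indep_sets_def by auto
  next
    fix A J assume J: "J \<noteq> {}" "J \<subseteq> I" "finite J" and A: "\<forall>j\<in>J. A j \<in> G (h j)"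
    define A' where "A' = A \<circ> the_inv_into J h"
    have injJ: "inj_on h J" using inj J(2) by (rule inj_on_subset)
    have A'h: "A' (h i) = A i" if "i \<in> J" for i using the_inv_into_f_f[OF injJ that] by (simp add: A'_def)
    have "prob (\<Inter>(A' ` (h ` J))) = (\<Prod>j\<in>h ` J. prob (A' j))"
      by (rule indep_setsD[OF IS]) (use J A A'h in auto)
    moreover have "\<Inter>(A' ` (h ` J)) = \<Inter>(A ` J)" using A'h by (auto simp: image_image)
    moreover have "(\<Prod>j\<in>h ` J. prob (A' j)) = (\<Prod>i\<in>J. prob (A i))"
      by (subst prod.reindex[OF injJ]) (simp add: A'h)
    ultimately show "prob (\<Inter>(A ` J)) = (\<Prod>j\<in>J. prob (A j))" by simp
  qed
  then show ?thesis using rv unfolding indep_vars_def G_def by auto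
qed

context model_f begin

lemma U_phi_distr: "distr M lborel (\<lambda>\<omega>. phi f (U n k \<omega>)) = uniform_measure lborel {f..1}"
proof (rule cdf_unique)
  have f: "0 < f" "f < 1" using f_pos f_lt1 by auto
  show "real_distribution (distr M lborel (\<lambda>\<omega>. phi f (U n k \<omega>)))"
    unfolding real_distribution_def real_distribution_axioms_def
    by (auto intro!: prob_space_distr)
  show "real_distribution (uniform_measure lborel {f..1})"
    unfolding real_distribution_def real_distribution_axioms_def using f
    by (auto intro!: prob_space_uniform_measure)
  show "cdf (distr M lborel (\<lambda>\<omega>. phi f (U n k \<omega>))) = cdf (uniform_measure lborel {f..1})"
  proof
    fix x
    have "cdf (distr M lborel (\<lambda>\<omega>. phi f (U n k \<omega>))) x = prob ((\<lambda>\<omega>. phi f (U n k \<omega>)) -` {..x} \<inter> space M)"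
      unfolding cdf_def by (rule measure_distr) auto
    also have "\<dots> = prob {\<omega> \<in> space M. U n k \<omega> \<in> {t. phi f t \<le> x}}" by (auto intro!: arg_cong[where f=prob])
    also have "\<dots> = measure lborel ({t. phi f t \<le> x} \<inter> {0..1})" by (rule prob_U) measurable
    also have "\<dots> = measure lborel ({f..1} \<inter> {..x}) / (1 - f)" by (rule phi_measure[OF f])
    also have "\<dots> = cdf (uniform_measure lborel {f..1}) x"
      unfolding cdf_def using f by (subst measure_uniform_measure) auto
    finally show "cdf (distr M lborel (\<lambda>\<omega>. phi f (U n k \<omega>))) x = cdf (uniform_measure lborel {f..1}) x" .
  qed
qed

definition Yv :: "nat \<Rightarrow> 'a \<Rightarrow> real" where
  "Yv i \<omega> = phi f (U (fst (prod_decode i)) (snd (prod_decode i)) \<omega>)"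

lemma Y_distr: "distr M lborel (Yv i) = uniform_measure lborel {f..1}"
  unfolding Yv_def by (rule U_phi_distr)

lemma Y_indep: "indep_vars (\<lambda>_. borel) Yv UNIV"
proof -
  define h where "h i = SU (fst (prod_decode i)) (snd (prod_decode i))" for i
  have inj: "inj_on h UNIV"
  proof (rule inj_onI)
    fix i j assume "h i = h j"
    then have "prod_decode i = prod_decode j" by (simp add: h_def prod_eq_iff)
    then show "i = j" by (metis prod_decode_inverse)
  qed
  have "indep_vars (\<lambda>_. borel) (model_vars X Z B U) (h ` UNIV)" by (rule indep_vars_subset[OF indep]) auto
  then have "indep_vars (\<lambda>_. borel) (\<lambda>i. model_vars X Z B U (h i)) UNIV" by (rule indep_vars_reindex[OF _ inj])
  then have "indep_vars (\<lambda>_. borel) (\<lambda>i \<omega>. phi f (model_vars X Z B U (h i) \<omega>)) UNIV"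
    by (rule indep_vars_compose2) simp
  then show ?thesis by (simp add: h_def Yv_def[abs_def])
qed

end


context model_f begin

lemma AE_U01: "AE \<omega> in M. \<forall>m k. 0 \<le> U m k \<omega> \<and> U m k \<omega> \<le> 1"
proof -
  have "AE \<omega> in M. 0 \<le> U m k \<omega> \<and> U m k \<omega> \<le> 1" for m k
  proof (rule AE_I'[where N="{\<omega> \<in> space M. U m k \<omega> \<in> - {0..1}}"])
    have "prob {\<omega> \<in> space M. U m k \<omega> \<in> - {0..1}} = measure lborel (- {0..1} \<inter> {0..1})"
      using prob_U[of "- {0..1}" m k] by simp
    then have "prob {\<omega> \<in> space M. U m k \<omega> \<in> - {0..1}} = 0" by simp
    then show "{\<omega> \<in> space M. U m k \<omega> \<in> - {0..1}} \<in> null_sets M"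
      by (auto simp: null_sets_def emeasure_eq_measure)
  qed auto
  then show ?thesis by (simp add: AE_all_countable)
qed

lemma prob_U_eq:
  assumes ab: "a \<noteq> b"
  shows "prob {\<omega> \<in> space M. U a 0 \<omega> = U b 0 \<omega>} = 0"
proof -
  define V where "V n = U (if n = (0::nat) then a else b) 0" for n
  have iv: "indep_var borel (V 0) borel (V 1)"
  proof (rule pair_indep[where blk="\<lambda>n. {SU (if n = 0 then a else b) 0}" and \<Phi>="\<lambda>n g. g (SU (if n = 0 then a else b) 0)"])
    show "(\<lambda>g. g (SU (if n = 0 then a else b) 0)) \<in> PiM {SU (if n = 0 then a else b) 0} (\<lambda>_. borel) \<rightarrow>\<^sub>M borel" for n
      by (rule measurable_component_singleton) simp
  qed (use ab in \<open>auto simp: V_def\<close>)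
  have VU: "V 0 = U a 0" "V 1 = U b 0" by (auto simp: V_def)
  define P1 where "P1 = distr M borel (U a 0)"
  define P2 where "P2 = distr M borel (U b 0)"
  have eqd: "P1 \<Otimes>\<^sub>M P2 = distr M (borel \<Otimes>\<^sub>M borel) (\<lambda>\<omega>. (U a 0 \<omega>, U b 0 \<omega>))"
    using iv unfolding VU indep_var_distribution_eq P1_def P2_def by auto
  interpret P2: prob_space P2 unfolding P2_def by (rule prob_space_distr) simp
  define Diag where "Diag = {p \<in> space (borel \<Otimes>\<^sub>M (borel::real measure)). fst p = snd p}"
  have Dsets: "Diag \<in> sets (borel \<Otimes>\<^sub>M borel)" unfolding Diag_def by measurable
  have "emeasure (P1 \<Otimes>\<^sub>M P2) Diag = (\<integral>\<^sup>+x. emeasure P2 (Pair x -` Diag) \<partial>P1)"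
    by (rule P2.emeasure_pair_measure_alt) (simp add: Dsets P1_def P2_def)
  also have "\<dots> = (\<integral>\<^sup>+x. 0 \<partial>P1)"
  proof (rule nn_integral_cong)
    fix x
    have "Pair x -` Diag = {x}" by (auto simp: Diag_def space_pair_measure)
    moreover have "emeasure P2 {x} = 0"
    proof -
      have "emeasure P2 {x} = emeasure M (U b 0 -` {x} \<inter> space M)"
        unfolding P2_def by (rule emeasure_distr) auto
      also have "U b 0 -` {x} \<inter> space M = {\<omega> \<in> space M. U b 0 \<omega> \<in> {x}}" by auto
      also have "emeasure M \<dots> = ennreal (measure lborel ({x} \<inter> {0..1}))"
        using prob_U[of "{x}" b 0] by (simp add: emeasure_eq_measure)
      also have "\<dots> = 0" by (cases "x \<in> {0..1}") auto
      finally show ?thesis .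
    qed
    ultimately show "emeasure P2 (Pair x -` Diag) = 0" by simp
  qed
  finally have "emeasure (distr M (borel \<Otimes>\<^sub>M borel) (\<lambda>\<omega>. (U a 0 \<omega>, U b 0 \<omega>))) Diag = 0"
    using eqd by simp
  moreover have "emeasure (distr M (borel \<Otimes>\<^sub>M borel) (\<lambda>\<omega>. (U a 0 \<omega>, U b 0 \<omega>))) Diag
      = emeasure M {\<omega> \<in> space M. U a 0 \<omega> = U b 0 \<omega>}"
    by (subst emeasure_distr[OF _ Dsets]) (auto simp: Diag_def space_pair_measure intro!: arg_cong[where f="emeasure M"])
  ultimately show ?thesis by (simp add: emeasure_eq_measure)
qed

lemma AE_inj: "AE \<omega> in M. inj (\<lambda>m. U m 0 \<omega>)"
proof -
  have "AE \<omega> in M. a \<noteq> b \<longrightarrow> U a 0 \<omega> \<noteq> U b 0 \<omega>" for a b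
  proof (cases "a = b")
    case False
    show ?thesis
    proof (rule AE_I'[where N="{\<omega> \<in> space M. U a 0 \<omega> = U b 0 \<omega>}"])
      show "{\<omega> \<in> space M. U a 0 \<omega> = U b 0 \<omega>} \<in> null_sets M"
        using prob_U_eq[OF False] by (auto simp: null_sets_def emeasure_eq_measure)
    qed auto
  qed simp
  then have "AE \<omega> in M. \<forall>a b. a \<noteq> b \<longrightarrow> U a 0 \<omega> \<noteq> U b 0 \<omega>" by (simp add: AE_all_countable)
  then show ?thesis by (auto simp: inj_def elim!: eventually_mono)
qed

end


context detm begin

lemma card_new_low: "card {v \<in> new n. fit v < f} = card {k. k < z n \<and> u n k < f}"
proof -
  have "{v \<in> new n. fit v < f} = (\<lambda>k. (n,k)) ` {k. k < z n \<and> u n k < f}"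
    by (auto simp: new_def fit_def)
  then show ?thesis by (simp add: card_image inj_on_def)
qed

lemma S_sum: "S n = (\<Sum>m<n. of_bool (b m) * real (card {k. k < z m \<and> u m k < f}) - (1 - of_bool (b m)) * real (x m))"
proof (induction n)
  case 0 then show ?case by (simp add: S_def born_def nom_def)
next
  case (Suc n)
  have c: "card {v \<in> born (Suc n). fit v < f} = card {v \<in> born n. fit v < f} + (if b n then card {k. k < z n \<and> u n k < f} else 0)"
  proof (cases "b n")
    case True
    have "{v \<in> born (Suc n). fit v < f} = {v \<in> born n. fit v < f} \<union> {v \<in> new n. fit v < f}"
      using True by (auto simp: born_Suc)
    moreover have "{v \<in> born n. fit v < f} \<inter> {v \<in> new n. fit v < f} = {}" using new_disj[of n] by blast
    ultimately show ?thesis using True fin_born fin_new card_new_low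
      by (simp add: card_Un_disjoint)
  qed (simp add: born_Suc)
  have "nom (Suc n) = nom n + (if b n then 0 else real (x n))" by (simp add: nom_def)
  then show ?case using Suc c by (simp add: S_def)
qed

lemma mneg_bound:
  assumes Sb: "\<And>n. \<bar>S n\<bar> \<le> C + g n" and g: "mono g"
  shows "mneg n \<le> C + g n"
proof (induction n)
  case 0 then show ?case using Sb[of 0] by (simp add: S_def born_def nom_def)
next
  case (Suc n)
  have "g n \<le> g (Suc n)" using g by (simp add: mono_def)
  then show ?case using Suc Sb[of "Suc n"] by simp
qed

end

context model_f begin

lemma S_D: "detm.S (\<lambda>m. B m \<omega>) (\<lambda>m. X m \<omega>) (\<lambda>m. Z m \<omega>) (\<lambda>m k. U m k \<omega>) f n = (\<Sum>i<n. D f i \<omega>)"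
  by (simp add: detm.S_sum D_def W_def)

lemma powr_mono_nat: "0 \<le> a \<Longrightarrow> mono (\<lambda>n::nat. (2 * real n) powr a)"
  by (auto simp: mono_def intro!: powr_mono2)


lemma ev_powr_ge:
  assumes "a > 0" shows "eventually (\<lambda>n::nat. K \<le> real n powr a) sequentially"
proof -
  have "filterlim (\<lambda>n::nat. real n powr a) at_top sequentially" using assms by real_asymp
  then show ?thesis by (simp add: filterlim_at_top)
qed

lemma part1:
  assumes \<epsilon>: "\<epsilon> > 0"
  shows "\<exists>C>0. AE \<omega> in M. \<exists>n0. \<forall>n\<ge>n0.
      0 \<le> real (card {(m, k). m \<le> n \<and> B m \<omega> \<and> k < Z m \<omega> \<and> f \<le> U m k \<omega> \<and> U m k \<omega> \<le> 1})
         - real (card {v \<in> tree (\<lambda>m. B m \<omega>) (\<lambda>m. X m \<omega>) (\<lambda>m. Z m \<omega>) (\<lambda>m k. U m k \<omega>) n. f \<le> U (fst v) (snd v) \<omega> \<and> U (fst v) (snd v) \<omega> \<le> 1}) \<and>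
      real (card {(m, k). m \<le> n \<and> B m \<omega> \<and> k < Z m \<omega> \<and> f \<le> U m k \<omega> \<and> U m k \<omega> \<le> 1})
         - real (card {v \<in> tree (\<lambda>m. B m \<omega>) (\<lambda>m. X m \<omega>) (\<lambda>m. Z m \<omega>) (\<lambda>m k. U m k \<omega>) n. f \<le> U (fst v) (snd v) \<omega> \<and> U (fst v) (snd v) \<omega> \<le> 1})
         \<le> C * real n powr (1/2 + \<epsilon>)"
proof -
  define a where "a = 1/2 + \<epsilon>"
  have a: "a > 0" using \<epsilon> by (simp add: a_def)
  interpret lD: l2seq M "D f" sigD by (rule D_l2)
  interpret lZ: l2seq M Dz "2 * expectation (\<lambda>\<omega>. (real (Z 0 \<omega>))\<^sup>2) + 2 * muZ\<^sup>2" by (rule Dz_l2)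
  define Cf where "Cf = 3 * 4 powr a + 1"
  have Cf: "Cf > 0" by (simp add: Cf_def add_pos_nonneg)
  show ?thesis
  proof (intro exI conjI)
    show "Cf > 0" by (fact Cf)
    show "AE \<omega> in M. \<exists>n0. \<forall>n\<ge>n0.
      0 \<le> real (card {(m, k). m \<le> n \<and> B m \<omega> \<and> k < Z m \<omega> \<and> f \<le> U m k \<omega> \<and> U m k \<omega> \<le> 1})
         - real (card {v \<in> tree (\<lambda>m. B m \<omega>) (\<lambda>m. X m \<omega>) (\<lambda>m. Z m \<omega>) (\<lambda>m k. U m k \<omega>) n. f \<le> U (fst v) (snd v) \<omega> \<and> U (fst v) (snd v) \<omega> \<le> 1}) \<and>
      real (card {(m, k). m \<le> n \<and> B m \<omega> \<and> k < Z m \<omega> \<and> f \<le> U m k \<omega> \<and> U m k \<omega> \<le> 1})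
         - real (card {v \<in> tree (\<lambda>m. B m \<omega>) (\<lambda>m. X m \<omega>) (\<lambda>m. Z m \<omega>) (\<lambda>m k. U m k \<omega>) n. f \<le> U (fst v) (snd v) \<omega> \<and> U (fst v) (snd v) \<omega> \<le> 1})
         \<le> Cf * real n powr (1/2 + \<epsilon>)"
      using lD.GL_main[OF \<epsilon>] lZ.GL_main[OF \<epsilon>]
    proof eventually_elim
      case (elim \<omega>)
      then obtain C1 C2 where C1: "\<And>n. \<bar>\<Sum>i<n. D f i \<omega>\<bar> \<le> C1 + (2 * real n) powr a"
        and C2: "\<And>n. \<bar>\<Sum>i<n. Dz i \<omega>\<bar> \<le> C2 + (2 * real n) powr a" unfolding a_def by blast
      let ?b = "\<lambda>m. B m \<omega>" and ?x = "\<lambda>m. X m \<omega>" and ?z = "\<lambda>m. Z m \<omega>" and ?u = "\<lambda>m k. U m k \<omega>"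
      have mn: "detm.mneg ?b ?x ?z ?u f n \<le> C1 + (2 * real n) powr a" for n
        by (rule detm.mneg_bound) (use C1 S_D a in \<open>auto intro: powr_mono_nat\<close>)
      have zb: "real (Z n \<omega>) \<le> 2 * C2 + 2 * (2 * real (Suc n)) powr a + muZ" for n
      proof -
        have "Dz n \<omega> = (\<Sum>i<Suc n. Dz i \<omega>) - (\<Sum>i<n. Dz i \<omega>)" by simp
        also have "\<dots> \<le> C2 + (2 * real (Suc n)) powr a + (C2 + (2 * real n) powr a)"
          using C2[of "Suc n"] C2[of n] by linarith
        also have "(2 * real n) powr a \<le> (2 * real (Suc n)) powr a" using a by (intro powr_mono2) auto
        finally show ?thesis by (simp add: Dz_def)
      qed
      define K where "K = C1 + 2 * C2 + muZ"
      obtain n0 where n0: "\<And>n. n \<ge> n0 \<Longrightarrow> K \<le> real n powr a" using ev_powr_ge[OF a, of K]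
        unfolding eventually_sequentially by blast
      show ?case
      proof (intro exI[of _ "max n0 1"] allI impI)
        fix n assume n: "n \<ge> max n0 1"
        note rb = detm.R_bound[where b="?b" and x="?x" and z="?z" and u="?u" and f=f and n=n, unfolded detm.fit_def, simplified]
        have "(2 * real n) powr a \<le> (2 * real (Suc n)) powr a" using a by (intro powr_mono2) auto
        moreover have "(2 * real (Suc n)) powr a \<le> 4 powr a * real n powr a"
        proof -
          have "2 * real (Suc n) \<le> 4 * real n" using n by simp
          then have "(2 * real (Suc n)) powr a \<le> (4 * real n) powr a" using a by (intro powr_mono2) auto
          then show ?thesis by (simp add: powr_mult)
        qed
        moreover have "K \<le> real n powr a" using n0 n by simp
        ultimately have "detm.mneg ?b ?x ?z ?u f n + real (Z n \<omega>) \<le> Cf * real n powr a"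
          using mn[of n] zb[of n] unfolding K_def Cf_def by (simp add: algebra_simps)
        then show "0 \<le> real (card {(m, k). m \<le> n \<and> B m \<omega> \<and> k < Z m \<omega> \<and> f \<le> U m k \<omega> \<and> U m k \<omega> \<le> 1})
         - real (card {v \<in> tree (\<lambda>m. B m \<omega>) (\<lambda>m. X m \<omega>) (\<lambda>m. Z m \<omega>) (\<lambda>m k. U m k \<omega>) n. f \<le> U (fst v) (snd v) \<omega> \<and> U (fst v) (snd v) \<omega> \<le> 1}) \<and>
      real (card {(m, k). m \<le> n \<and> B m \<omega> \<and> k < Z m \<omega> \<and> f \<le> U m k \<omega> \<and> U m k \<omega> \<le> 1})
         - real (card {v \<in> tree (\<lambda>m. B m \<omega>) (\<lambda>m. X m \<omega>) (\<lambda>m. Z m \<omega>) (\<lambda>m k. U m k \<omega>) n. f \<le> U (fst v) (snd v) \<omega> \<and> U (fst v) (snd v) \<omega> \<le> 1})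
         \<le> Cf * real n powr (1/2 + \<epsilon>)"
          using rb unfolding a_def by linarith
      qed
    qed
  qed
qed


lemma ev_lin:
  assumes c: "c > 0"
  shows "eventually (\<lambda>n::nat. K + L * (2 * real n) powr (3/4) \<le> c * real n) sequentially"
proof -
  have "(\<lambda>n::nat. (K + L * (2 * real n) powr (3/4)) / real n) \<longlonglongrightarrow> 0" by real_asymp
  then have "eventually (\<lambda>n::nat. (K + L * (2 * real n) powr (3/4)) / real n < c) sequentially"
    using c by (rule order_tendstoD)
  moreover have "eventually (\<lambda>n::nat. n > 0) sequentially" by (rule eventually_gt_at_top)
  ultimately show ?thesis
  proof eventually_elim
    case (elim n)
    then show ?case by (simp add: divide_less_eq)
  qed
qed

lemma Dg_sum: "(\<Sum>m<n. Dg m \<omega>) = real (card {m \<in> {..<n}. B m \<omega> \<and> f \<le> U m 0 \<omega> \<and> U m 0 \<omega> \<le> 1}) - real n * (p * (1 - f))"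
  unfolding Dg_def by (simp add: sum_subtractf sum_of_bool_real) (auto intro!: arg_cong[where f=card])

lemma part2:
  "approaches_random_sample M (\<lambda>n \<omega>. (\<lambda>v. U (fst v) (snd v) \<omega>) ` tree (\<lambda>m. B m \<omega>) (\<lambda>m. X m \<omega>) (\<lambda>m. Z m \<omega>) (\<lambda>m k. U m k \<omega>) n)
     (uniform_measure lborel {f..1})"
  unfolding approaches_random_sample_def
proof (intro exI[of _ Yv] conjI allI)
  show "indep_vars (\<lambda>_. borel) Yv UNIV" by (rule Y_indep)
  show "distr M lborel (Yv i) = uniform_measure lborel {f..1}" for i by (rule Y_distr)
  interpret lD: l2seq M "D f" sigD by (rule D_l2)
  interpret lG: l2seq M Dg 1 by (rule Dg_l2)
  have q: "(1::real)/4 > 0" by simp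
  have c: "p * (1 - f) > 0" using p_pos f_lt1 by simp
  show "AE \<omega> in M. \<exists>I. (\<forall>n. finite (I n)) \<and> incseq I \<and>
          filterlim (\<lambda>n. card ((\<lambda>i. Yv i \<omega>) ` I n)) at_top sequentially \<and>
          (\<forall>e>0. \<forall>\<^sub>F n in sequentially.
             real (card (((\<lambda>v. U (fst v) (snd v) \<omega>) ` tree (\<lambda>m. B m \<omega>) (\<lambda>m. X m \<omega>) (\<lambda>m. Z m \<omega>) (\<lambda>m k. U m k \<omega>) n - (\<lambda>i. Yv i \<omega>) ` I n) \<union>
                        ((\<lambda>i. Yv i \<omega>) ` I n - (\<lambda>v. U (fst v) (snd v) \<omega>) ` tree (\<lambda>m. B m \<omega>) (\<lambda>m. X m \<omega>) (\<lambda>m. Z m \<omega>) (\<lambda>m k. U m k \<omega>) n)))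
             \<le> e * real (card ((\<lambda>i. Yv i \<omega>) ` I n)))"
    using lD.GL_main[OF q] lG.GL_main[OF q] AE_U01 AE_inj pos
  proof eventually_elim
    case (elim \<omega>)
    then obtain C1 C3 where C1: "\<And>n. \<bar>\<Sum>i<n. D f i \<omega>\<bar> \<le> C1 + (2 * real n) powr (3/4)"
      and C3: "\<And>n. \<bar>\<Sum>i<n. Dg i \<omega>\<bar> \<le> C3 + (2 * real n) powr (3/4)" by auto
    have U01: "\<And>m k. U m k \<omega> \<le> 1" and inj: "inj (\<lambda>m. U m 0 \<omega>)" and zpos: "\<And>m. 0 < Z m \<omega>"
      using elim by auto
    let ?b = "\<lambda>m. B m \<omega>" and ?x = "\<lambda>m. X m \<omega>" and ?z = "\<lambda>m. Z m \<omega>" and ?u = "\<lambda>m k. U m k \<omega>"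
    let ?fit = "\<lambda>v. U (fst v) (snd v) \<omega>"
    let ?Hb = "detm.Hb ?b ?z ?u f"
    have fitE: "detm.fit ?u = ?fit" by (simp add: detm.fit_def[abs_def])
    define I where "I n = {i. prod_decode i \<in> ?Hb n}" for n
    have Hb_mono: "?Hb n \<subseteq> ?Hb (Suc n)" for n
      by (auto simp: detm.Hb_def detm.born_def)
    have Ivim: "I n = prod_decode -` ?Hb n" for n by (auto simp: I_def)
    have finI: "finite (I n)" for n
      unfolding Ivim by (rule finite_vimageI[OF detm.fin_Hb inj_prod_decode])
    have img: "(\<lambda>i. Yv i \<omega>) ` I n = ?fit ` ?Hb n" for n
    proof -
      have "(\<lambda>i. Yv i \<omega>) ` I n = (\<lambda>i. ?fit (prod_decode i)) ` I n"
      proof (rule image_cong[OF refl])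
        fix i assume "i \<in> I n"
        then have "f \<le> ?fit (prod_decode i)" by (simp add: I_def detm.Hb_def detm.fit_def)
        then show "Yv i \<omega> = ?fit (prod_decode i)" by (simp add: Yv_def phi_def)
      qed
      also have "\<dots> = ?fit ` (prod_decode ` I n)" by (simp add: image_image)
      also have "prod_decode ` I n = ?Hb n" unfolding Ivim
        by (simp add: image_vimage_eq surj_prod_decode)
      finally show ?thesis .
    qed
    have mn: "detm.mneg ?b ?x ?z ?u f n \<le> C1 + (2 * real n) powr (3/4)" for n
      by (rule detm.mneg_bound) (use C1 S_D in \<open>auto intro: powr_mono_nat\<close>)
    have lower: "p * (1 - f) * real n - C3 - (2 * real n) powr (3/4) \<le> real (card (?fit ` ?Hb n))" for n
    proof -
      have "card {m \<in> {..<n}. B m \<omega> \<and> f \<le> U m 0 \<omega> \<and> U m 0 \<omega> \<le> 1} \<le> card (detm.fit ?u ` ?Hb n)"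
        by (rule detm.card_Hb_lower) (use zpos inj in auto)
      then have "real (card {m \<in> {..<n}. B m \<omega> \<and> f \<le> U m 0 \<omega> \<and> U m 0 \<omega> \<le> 1}) \<le> real (card (?fit ` ?Hb n))"
        unfolding fitE by simp
      then show ?thesis using Dg_sum[where n=n and \<omega>=\<omega>] C3[of n] by (simp add: algebra_simps)
    qed
    have le1': "\<And>v. detm.fit ?u v \<le> 1" by (simp add: detm.fit_def U01)
    note sd = detm.sym_diff_bound[where b="?b" and x="?x" and z="?z" and u="?u" and f=f, OF le1', unfolded fitE]
    have upper: "real (card ((?fit ` detm.T ?b ?x ?z ?u n - ?fit ` ?Hb n) \<union> (?fit ` ?Hb n - ?fit ` detm.T ?b ?x ?z ?u n)))
        \<le> 3 * C1 + 3 * (2 * real n) powr (3/4)" for n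
      using sd[of n] mn[of n] S_D[where \<omega>=\<omega> and n=n] C1[of n] by linarith
    show ?case
    proof (intro exI[of _ I] conjI allI impI)
      show "finite (I n)" for n by (rule finI)
      show "incseq I" by (rule incseq_SucI) (use Hb_mono in \<open>auto simp: I_def\<close>)
      show "filterlim (\<lambda>n. card ((\<lambda>i. Yv i \<omega>) ` I n)) at_top sequentially"
        unfolding filterlim_at_top
      proof
        fix N :: nat
        show "\<forall>\<^sub>F n in sequentially. N \<le> card ((\<lambda>i. Yv i \<omega>) ` I n)"
          using ev_lin[OF c, of "C3 + real N" 1]
        proof eventually_elim
          case (elim n)
          then have "real N \<le> real (card ((\<lambda>i. Yv i \<omega>) ` I n))" unfolding img using lower[of n] by linarith
          then show ?case by simp
        qed
      qed
      fix e :: real assume e: "e > 0"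
      have ev: "eventually (\<lambda>n. 3 * C1 + e * C3 + (3 + e) * (2 * real n) powr (3/4) \<le> e * (p * (1 - f)) * real n) sequentially"
        by (rule ev_lin) (use e c in simp)
      show "\<forall>\<^sub>F n in sequentially.
             real (card ((?fit ` tree ?b ?x ?z ?u n - (\<lambda>i. Yv i \<omega>) ` I n) \<union>
                        ((\<lambda>i. Yv i \<omega>) ` I n - ?fit ` tree ?b ?x ?z ?u n)))
             \<le> e * real (card ((\<lambda>i. Yv i \<omega>) ` I n))"
        using ev
      proof (rule eventually_mono)
        fix n
        assume h: "3 * C1 + e * C3 + (3 + e) * (2 * real n) powr (3 / 4) \<le> e * (p * (1 - f)) * real n"
        have l2: "e * (p * (1 - f) * real n - C3 - (2 * real n) powr (3/4)) \<le> e * real (card (?fit ` ?Hb n))"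
          using lower[of n] e by (intro mult_left_mono) auto
        have h2: "3 * C1 + 3 * (2 * real n) powr (3/4) \<le> e * (p * (1 - f) * real n - C3 - (2 * real n) powr (3/4))"
          using h by (simp add: algebra_simps)
        have "real (card ((?fit ` tree ?b ?x ?z ?u n - ?fit ` ?Hb n) \<union> (?fit ` ?Hb n - ?fit ` tree ?b ?x ?z ?u n)))
             \<le> e * real (card (?fit ` ?Hb n))"
          using upper[of n] h2 l2 by linarith
        then show "real (card ((?fit ` tree ?b ?x ?z ?u n - (\<lambda>i. Yv i \<omega>) ` I n) \<union>
                        ((\<lambda>i. Yv i \<omega>) ` I n - ?fit ` tree ?b ?x ?z ?u n)))
             \<le> e * real (card ((\<lambda>i. Yv i \<omega>) ` I n))"
          unfolding img .
      qed
    qed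
  qed
qed

end

theorem theorem1:
  fixes M :: "'a measure"
    and X Z :: "nat \<Rightarrow> 'a \<Rightarrow> nat"
    and B :: "nat \<Rightarrow> 'a \<Rightarrow> bool"
    and U :: "nat \<Rightarrow> nat \<Rightarrow> 'a \<Rightarrow> real"
    and p :: real and Mx :: nat and f :: real
    and T :: "nat \<Rightarrow> 'a \<Rightarrow> (nat \<times> nat) set"
    and R R' :: "nat \<Rightarrow> 'a \<Rightarrow> (nat \<times> nat) set"
  assumes "prob_space M"
    and indep: "prob_space.indep_vars M (\<lambda>_. borel) (model_vars X Z B U) UNIV"
    and X_id: "\<And>n. distr M (count_space UNIV) (X n) = distr M (count_space UNIV) (X 0)"
    and Z_id: "\<And>n. distr M (count_space UNIV) (Z n) = distr M (count_space UNIV) (Z 0)"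
    and B_law: "\<And>n. measure M {\<omega> \<in> space M. B n \<omega>} = p"
    and U_law: "\<And>n k. distr M lborel (U n k) = uniform_measure lborel {0..1}"
    and pos: "AE \<omega> in M. \<forall>n. 0 < X n \<omega> \<and> 0 < Z n \<omega>"
    and Mx_pos: "0 < Mx"
    and X_bdd: "AE \<omega> in M. \<forall>n. X n \<omega> \<le> Mx"
    and Z2: "integrable M (\<lambda>\<omega>. (real (Z 0 \<omega>))\<^sup>2)"
    and p_lt1: "p < 1"
    and p_gt: "integral\<^sup>L M (\<lambda>\<omega>. real (X 0 \<omega>)) /
               (integral\<^sup>L M (\<lambda>\<omega>. real (X 0 \<omega>)) + integral\<^sup>L M (\<lambda>\<omega>. real (Z 0 \<omega>))) < p"
    and f_def: "f = ((1 - p) / p) * (integral\<^sup>L M (\<lambda>\<omega>. real (X 0 \<omega>)) / integral\<^sup>L M (\<lambda>\<omega>. real (Z 0 \<omega>)))"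
    and T_def: "T = (\<lambda>n \<omega>. tree (\<lambda>m. B m \<omega>) (\<lambda>m. X m \<omega>) (\<lambda>m. Z m \<omega>) (\<lambda>m k. U m k \<omega>) n)"
    and R_def: "R = (\<lambda>n \<omega>. {v \<in> T n \<omega>. f \<le> U (fst v) (snd v) \<omega> \<and> U (fst v) (snd v) \<omega> \<le> 1})"
    and R'_def: "R' = (\<lambda>n \<omega>. {(m, k). m \<le> n \<and> B m \<omega> \<and> k < Z m \<omega> \<and> f \<le> U m k \<omega> \<and> U m k \<omega> \<le> 1})"
  shows "(\<forall>\<epsilon>>0. \<exists>C>0. AE \<omega> in M. \<exists>n0. \<forall>n\<ge>n0.
            0 \<le> real (card (R' n \<omega>)) - real (card (R n \<omega>)) \<and>
            real (card (R' n \<omega>)) - real (card (R n \<omega>)) \<le> C * real n powr (1/2 + \<epsilon>))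
         \<and> approaches_random_sample M (\<lambda>n \<omega>. (\<lambda>v. U (fst v) (snd v) \<omega>) ` T n \<omega>)
             (uniform_measure lborel {f..1})"
proof -
  interpret prob_space M by (rule assms(1))
  interpret model M X Z B U p Mx
    by unfold_locales (use assms in auto)
  interpret model_f M X Z B U p Mx f
    by unfold_locales (use assms in \<open>simp_all add: muX_def muZ_def\<close>)
  show ?thesis
    unfolding R_def R'_def T_def using part1 part2 by simp
qed

end
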